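(* Let $\Bbbk$ be a commutative ring. The coinduction functor $Q:\mathrm{FI}\text{-}\mathrm{Mod}\to\mathrm{FI}\text{-}\mathrm{Mod}$ is isomorphic to the functor $Q':V\mapsto Q'V$.
   Context: $\mathrm{FI}$ is the category whose objects are finite sets and whose morphisms are injective maps. An $\mathrm{FI}$-module is a functor from $\mathrm{FI}$ to the category of $\Bbbk$-modules; homomorphisms are natural transformations; $\mathrm{FI}\text{-}\mathrm{Mod}$ denotes this category. For an $\mathrm{FI}$-module $V$ and a finite set $X$ write $V_X=V(X)$, and for an injection $f$ write $f_*=V(f)$. For a finite set $X$, $M(X)$ is the $\mathrm{FI}$-module with $M(X)_Y=\Bbbk\,\mathrm{FI}(X,Y)$ (free $\Bbbk$-module on injections $X\to Y$), with structure maps given by postcomposition; for $f\in\mathrm{FI}(X,Y)$ let $\rho_f:M(Y)\to M(X)$, $g\mapsto g\circ f$. Fix a one-element set $\{\star\}$; the shift functor is $SV=V\circ\sigma$ where $\sigma(X)=X\sqcup\{\star\}$, $\sigma(f)=f\sqcup\mathrm{id}_{\{\star\}}$. The coinduction functor is $Q=S^\dagger$, defined by $(QV)_X=\mathrm{Hom}_{\mathrm{FI}\text{-}\mathrm{Mod}}(S(M(X)),V)$, with $f_*(\phi)=\phi\circ S(\rho_f)$ for $f\in\mathrm{FI}(X,Y)$, and acting on homomorphisms $V\to W$ by postcomposition. The negative-one shift functor is defined by $(\widetilde{S}_{-1}V)_X=\bigoplus_{x\in X}V_{X\setminus\{x\}}$, and for an injection $f:X\to Y$, $f_*:(\widetilde{S}_{-1}V)_X\to(\widetilde{S}_{-1}V)_Y$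 restricts on the summand $V_{X\setminus\{x\}}$ to $(f|_{X\setminus\{x\}})_*:V_{X\setminus\{x\}}\to V_{Y\setminus\{f(x)\}}$. For an injection $f:X\to Y$ and $y\in Y\setminus f(X)$, let $\partial_yf:X\to Y\setminus\{y\}$ be $f$ with codomain restricted, and define $\partial f_*:V_X\to(\widetilde{S}_{-1}V)_Y$ by $v\mapsto\sum_{y\in Y\setminus f(X)}(\partial_yf)_*(v)$, where $(\partial_yf)_*(v)$ lies in the summand $V_{Y\setminus\{y\}}$. The $\mathrm{FI}$-module $Q'V$ is given by $(Q'V)_X=V_X\oplus(\widetilde{S}_{-1}V)_X$, and for an injection $f:X\to Y$, $f_*:(Q'V)_X\to(Q'V)_Y$ is given in column notation by the matrix $\begin{pmatrix} f_* & 0\\ \partial f_* & f_*\end{pmatrix}$, i.e. $(v,w)\mapsto (f_*v,\ \partial f_*(v)+f_*w)$; $Q'$ acts on homomorphisms componentwise. *)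

theory Defs
  imports "HOL-Algebra.Module" "HOL-Library.FuncSet"
begin

text \<open>Objects of FI are finite sets; we use finite subsets of nat (equivalent category).
  Morphisms X -> Y are injections, represented as extensional functions on X.\<close>

definition FIm :: "nat set \<Rightarrow> nat set \<Rightarrow> (nat \<Rightarrow> nat) set" where
  "FIm X Y = {f \<in> X \<rightarrow>\<^sub>E Y. inj_on f X}"

text \<open>sigma(X) = X disjoint-union {star}, realised as {0} union Suc`X with star = 0.\<close>
definition sig :: "nat set \<Rightarrow> nat set" where
  "sig X = insert 0 (Suc ` X)"

definition sigf :: "nat set \<Rightarrow> (nat \<Rightarrow> nat) \<Rightarrow> (nat \<Rightarrow> nat)" where
  "sigf X f = (\<lambda>n\<in>sig X. if n = 0 then 0 else Suc (f (n - 1)))"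

definition mk_module :: "'v set \<Rightarrow> 'v \<Rightarrow> ('v \<Rightarrow> 'v \<Rightarrow> 'v) \<Rightarrow> ('k \<Rightarrow> 'v \<Rightarrow> 'v) \<Rightarrow> ('k, 'v) module" where
  "mk_module C z a s = \<lparr>carrier = C, monoid.mult = undefined, one = undefined,
      zero = z, add = a, smult = s\<rparr>"

definition module_hom :: "('k, 'm) ring_scheme \<Rightarrow> ('k, 'v) module \<Rightarrow> ('k, 'w) module \<Rightarrow> ('v \<Rightarrow> 'w) set" where
  "module_hom R M N = {f. f \<in> carrier M \<rightarrow> carrier N
      \<and> (\<forall>x\<in>carrier M. \<forall>y\<in>carrier M. f (x \<oplus>\<^bsub>M\<^esub> y) = f x \<oplus>\<^bsub>N\<^esub> f y)
      \<and> (\<forall>a\<in>carrier R. \<forall>x\<in>carrier M. f (a \<odot>\<^bsub>M\<^esub> x) = a \<odot>\<^bsub>N\<^esub> f x)}"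

record ('k, 'v) fimod =
  FMod :: "nat set \<Rightarrow> ('k, 'v) module"
  FAct :: "nat set \<Rightarrow> nat set \<Rightarrow> (nat \<Rightarrow> nat) \<Rightarrow> 'v \<Rightarrow> 'v"

definition is_FI_module :: "('k, 'm) ring_scheme \<Rightarrow> ('k, 'v) fimod \<Rightarrow> bool" where
  "is_FI_module R V \<longleftrightarrow>
     (\<forall>X. finite X \<longrightarrow> module R (FMod V X))
   \<and> (\<forall>X Y f. finite X \<longrightarrow> finite Y \<longrightarrow> f \<in> FIm X Y \<longrightarrow>
        FAct V X Y f \<in> module_hom R (FMod V X) (FMod V Y))
   \<and> (\<forall>X. finite X \<longrightarrow> (\<forall>v\<in>carrier (FMod V X). FAct V X X (restrict id X) v = v))
   \<and> (\<forall>X Y Z f g. finite X \<longrightarrow> finite Y \<longrightarrow> finite Z \<longrightarrow> f \<in> FIm X Y \<longrightarrow> g \<in> FIm Y Z \<longrightarrow>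
        (\<forall>v\<in>carrier (FMod V X).
           FAct V X Z (compose X g f) v = FAct V Y Z g (FAct V X Y f v)))"

definition FIHom :: "('k, 'm) ring_scheme \<Rightarrow> ('k, 'v) fimod \<Rightarrow> ('k, 'w) fimod
    \<Rightarrow> (nat set \<Rightarrow> 'v \<Rightarrow> 'w) set" where
  "FIHom R V W = {\<alpha>.
      (\<forall>X. finite X \<longrightarrow> \<alpha> X \<in> module_hom R (FMod V X) (FMod W X))
    \<and> (\<forall>X Y f. finite X \<longrightarrow> finite Y \<longrightarrow> f \<in> FIm X Y \<longrightarrow>
         (\<forall>v\<in>carrier (FMod V X). \<alpha> Y (FAct V X Y f v) = FAct W X Y f (\<alpha> X v)))}"

text \<open>Extensional representatives of homomorphisms (so that Hom(V,W) is a set of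
  uniquely represented elements).\<close>
definition FIHomE :: "('k, 'm) ring_scheme \<Rightarrow> ('k, 'v) fimod \<Rightarrow> ('k, 'w) fimod
    \<Rightarrow> (nat set \<Rightarrow> 'v \<Rightarrow> 'w) set" where
  "FIHomE R V W = {\<alpha> \<in> FIHom R V W. \<alpha> \<in> extensional {X. finite X}
      \<and> (\<forall>X. finite X \<longrightarrow> \<alpha> X \<in> extensional (carrier (FMod V X)))}"

definition FIIso :: "('k, 'm) ring_scheme \<Rightarrow> ('k, 'v) fimod \<Rightarrow> ('k, 'w) fimod
    \<Rightarrow> (nat set \<Rightarrow> 'v \<Rightarrow> 'w) \<Rightarrow> bool" where
  "FIIso R V W \<eta> \<longleftrightarrow> \<eta> \<in> FIHom R V W
     \<and> (\<forall>X. finite X \<longrightarrow> bij_betw (\<eta> X) (carrier (FMod V X)) (carrier (FMod W X)))"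

definition free_mod :: "('k, 'm) ring_scheme \<Rightarrow> 'i set \<Rightarrow> ('k, 'i \<Rightarrow> 'k) module" where
  "free_mod R I = mk_module (I \<rightarrow>\<^sub>E carrier R) (\<lambda>i\<in>I. \<zero>\<^bsub>R\<^esub>)
      (\<lambda>c d. \<lambda>i\<in>I. c i \<oplus>\<^bsub>R\<^esub> d i) (\<lambda>a c. \<lambda>i\<in>I. a \<otimes>\<^bsub>R\<^esub> c i)"

text \<open>M(X): M(X)_Y = k FI(X,Y), structure maps given by postcomposition
  (extended linearly).\<close>
definition Mfree :: "('k, 'm) ring_scheme \<Rightarrow> nat set \<Rightarrow> ('k, (nat \<Rightarrow> nat) \<Rightarrow> 'k) fimod" where
  "Mfree R X = \<lparr>FMod = (\<lambda>Y. free_mod R (FIm X Y)),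
     FAct = (\<lambda>Y Z g c. \<lambda>h\<in>FIm X Z.
        \<Oplus>\<^bsub>R\<^esub>h'\<in>{h' \<in> FIm X Y. compose X g h' = h}. c h')\<rparr>"

text \<open>rho_f : M(Y) -> M(X) for f in FI(X,Y), component at Z: g |-> g o f.\<close>
definition rho :: "('k, 'm) ring_scheme \<Rightarrow> nat set \<Rightarrow> nat set \<Rightarrow> (nat \<Rightarrow> nat) \<Rightarrow> nat set
    \<Rightarrow> ((nat \<Rightarrow> nat) \<Rightarrow> 'k) \<Rightarrow> ((nat \<Rightarrow> nat) \<Rightarrow> 'k)" where
  "rho R X Y f Z c = (\<lambda>h\<in>FIm X Z. \<Oplus>\<^bsub>R\<^esub>g\<in>{g \<in> FIm Y Z. compose X g f = h}. c g)"

definition Shift :: "('k, 'v) fimod \<Rightarrow> ('k, 'v) fimod" where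
  "Shift V = \<lparr>FMod = (\<lambda>Y. FMod V (sig Y)),
              FAct = (\<lambda>Y Z f. FAct V (sig Y) (sig Z) (sigf Y f))\<rparr>"

definition Qmod :: "('k, 'm) ring_scheme \<Rightarrow> ('k, 'v) fimod \<Rightarrow> nat set
    \<Rightarrow> ('k, nat set \<Rightarrow> ((nat \<Rightarrow> nat) \<Rightarrow> 'k) \<Rightarrow> 'v) module" where
  "Qmod R V X = mk_module (FIHomE R (Shift (Mfree R X)) V)
     (\<lambda>Z\<in>{Z. finite Z}. \<lambda>c\<in>carrier (FMod (Shift (Mfree R X)) Z). \<zero>\<^bsub>FMod V Z\<^esub>)
     (\<lambda>\<phi> \<psi>. \<lambda>Z\<in>{Z. finite Z}. \<lambda>c\<in>carrier (FMod (Shift (Mfree R X)) Z).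
          \<phi> Z c \<oplus>\<^bsub>FMod V Z\<^esub> \<psi> Z c)
     (\<lambda>a \<phi>. \<lambda>Z\<in>{Z. finite Z}. \<lambda>c\<in>carrier (FMod (Shift (Mfree R X)) Z).
          a \<odot>\<^bsub>FMod V Z\<^esub> \<phi> Z c)"

text \<open>f_* phi = phi o S(rho_f).\<close>
definition Q :: "('k, 'm) ring_scheme \<Rightarrow> ('k, 'v) fimod
    \<Rightarrow> ('k, nat set \<Rightarrow> ((nat \<Rightarrow> nat) \<Rightarrow> 'k) \<Rightarrow> 'v) fimod" where
  "Q R V = \<lparr>FMod = Qmod R V,
     FAct = (\<lambda>X Y f \<phi>. \<lambda>Z\<in>{Z. finite Z}. \<lambda>c\<in>carrier (FMod (Shift (Mfree R Y)) Z).
        \<phi> Z (rho R X Y f (sig Z) c))\<rparr>"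

definition Qmap :: "('k, 'm) ring_scheme \<Rightarrow> (nat set \<Rightarrow> 'v \<Rightarrow> 'w) \<Rightarrow> nat set
    \<Rightarrow> (nat set \<Rightarrow> ((nat \<Rightarrow> nat) \<Rightarrow> 'k) \<Rightarrow> 'v) \<Rightarrow> (nat set \<Rightarrow> ((nat \<Rightarrow> nat) \<Rightarrow> 'k) \<Rightarrow> 'w)" where
  "Qmap R \<alpha> X \<phi> = (\<lambda>Z\<in>{Z. finite Z}. \<lambda>c\<in>carrier (FMod (Shift (Mfree R X)) Z). \<alpha> Z (\<phi> Z c))"

text \<open>(Q'V)_X = V_X (+) (bigoplus over x in X of V_{X - x}); the finite direct sum is
  represented by extensional functions on X.\<close>
definition Q'mod :: "('k, 'v) fimod \<Rightarrow> nat set \<Rightarrow> ('k, 'v \<times> (nat \<Rightarrow> 'v)) module" where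
  "Q'mod V X = mk_module
     (carrier (FMod V X) \<times> (\<Pi>\<^sub>E x\<in>X. carrier (FMod V (X - {x}))))
     (\<zero>\<^bsub>FMod V X\<^esub>, \<lambda>x\<in>X. \<zero>\<^bsub>FMod V (X - {x})\<^esub>)
     (\<lambda>(v, w) (v', w'). (v \<oplus>\<^bsub>FMod V X\<^esub> v', \<lambda>x\<in>X. w x \<oplus>\<^bsub>FMod V (X - {x})\<^esub> w' x))
     (\<lambda>a (v, w). (a \<odot>\<^bsub>FMod V X\<^esub> v, \<lambda>x\<in>X. a \<odot>\<^bsub>FMod V (X - {x})\<^esub> w x))"

text \<open>f_*(v,w) = (f_* v, dF_*(v) + f_* w).  On the summand V_{X - x} the map f_* is
  (f restricted to X - x)_* into the summand V_{Y - f x}; the component of dF_*(v) at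
  y not in f(X) is (d_y f)_* v, where d_y f is f with codomain Y - y.\<close>
definition Q' :: "('k, 'v) fimod \<Rightarrow> ('k, 'v \<times> (nat \<Rightarrow> 'v)) fimod" where
  "Q' V = \<lparr>FMod = Q'mod V,
     FAct = (\<lambda>X Y f (v, w).
        (FAct V X Y f v,
         \<lambda>y\<in>Y. (if y \<in> f ` X then
                   FAct V (X - {the_inv_into X f y}) (Y - {y})
                        (restrict f (X - {the_inv_into X f y})) (w (the_inv_into X f y))
                 else FAct V X (Y - {y}) f v)))\<rparr>"

definition Q'map :: "(nat set \<Rightarrow> 'v \<Rightarrow> 'w) \<Rightarrow> nat set \<Rightarrow> 'v \<times> (nat \<Rightarrow> 'v) \<Rightarrow> 'w \<times> (nat \<Rightarrow> 'w)" where
  "Q'map \<alpha> X = (\<lambda>(v, w). (\<alpha> X v, \<lambda>x\<in>X. \<alpha> (X - {x}) (w x)))"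

end

theory Submission
  imports Defs
begin


definition PiM :: "'i set \<Rightarrow> ('i \<Rightarrow> ('k,'v) module) \<Rightarrow> ('k, 'i \<Rightarrow> 'v) module" where
  "PiM I M = mk_module (\<Pi>\<^sub>E i\<in>I. carrier (M i)) (\<lambda>i\<in>I. \<zero>\<^bsub>M i\<^esub>)
     (\<lambda>f g. \<lambda>i\<in>I. f i \<oplus>\<^bsub>M i\<^esub> g i) (\<lambda>a f. \<lambda>i\<in>I. a \<odot>\<^bsub>M i\<^esub> f i)"

lemma mk_module_simps[simp]:
  "carrier (mk_module C z a s) = C" "zero (mk_module C z a s) = z"
  "add (mk_module C z a s) = a" "smult (mk_module C z a s) = s"
  by (simp_all add: mk_module_def)


lemma modl:
  assumes "module R M"
  shows mod_add_closed: "\<And>x y. x \<in> carrier M \<Longrightarrow> y \<in> carrier M \<Longrightarrow> x \<oplus>\<^bsub>M\<^esub> y \<in> carrier M"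
    and mod_zero_closed: "\<zero>\<^bsub>M\<^esub> \<in> carrier M"
    and mod_neg_closed: "\<And>x. x \<in> carrier M \<Longrightarrow> \<ominus>\<^bsub>M\<^esub> x \<in> carrier M"
    and mod_assoc: "\<And>x y z. x \<in> carrier M \<Longrightarrow> y \<in> carrier M \<Longrightarrow> z \<in> carrier M \<Longrightarrow> x \<oplus>\<^bsub>M\<^esub> y \<oplus>\<^bsub>M\<^esub> z = x \<oplus>\<^bsub>M\<^esub> (y \<oplus>\<^bsub>M\<^esub> z)"
    and mod_comm: "\<And>x y. x \<in> carrier M \<Longrightarrow> y \<in> carrier M \<Longrightarrow> x \<oplus>\<^bsub>M\<^esub> y = y \<oplus>\<^bsub>M\<^esub> x"
    and mod_l_zero: "\<And>x. x \<in> carrier M \<Longrightarrow> \<zero>\<^bsub>M\<^esub> \<oplus>\<^bsub>M\<^esub> x = x"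
    and mod_r_zero: "\<And>x. x \<in> carrier M \<Longrightarrow> x \<oplus>\<^bsub>M\<^esub> \<zero>\<^bsub>M\<^esub> = x"
    and mod_l_neg: "\<And>x. x \<in> carrier M \<Longrightarrow> \<ominus>\<^bsub>M\<^esub> x \<oplus>\<^bsub>M\<^esub> x = \<zero>\<^bsub>M\<^esub>"
proof -
  interpret module R M by fact
  show "\<And>x y. x \<in> carrier M \<Longrightarrow> y \<in> carrier M \<Longrightarrow> x \<oplus>\<^bsub>M\<^esub> y \<in> carrier M" by simp
  show "\<zero>\<^bsub>M\<^esub> \<in> carrier M" by simp
  show "\<And>x. x \<in> carrier M \<Longrightarrow> \<ominus>\<^bsub>M\<^esub> x \<in> carrier M" by simp
  show "\<And>x y z. x \<in> carrier M \<Longrightarrow> y \<in> carrier M \<Longrightarrow> z \<in> carrier M \<Longrightarrow> x \<oplus>\<^bsub>M\<^esub> y \<oplus>\<^bsub>M\<^esub> z = x \<oplus>\<^bsub>M\<^esub> (y \<oplus>\<^bsub>M\<^esub> z)" by (simp add: a_assoc)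
  show "\<And>x y. x \<in> carrier M \<Longrightarrow> y \<in> carrier M \<Longrightarrow> x \<oplus>\<^bsub>M\<^esub> y = y \<oplus>\<^bsub>M\<^esub> x" by (simp add: a_comm)
  show "\<And>x. x \<in> carrier M \<Longrightarrow> \<zero>\<^bsub>M\<^esub> \<oplus>\<^bsub>M\<^esub> x = x" by simp
  show "\<And>x. x \<in> carrier M \<Longrightarrow> x \<oplus>\<^bsub>M\<^esub> \<zero>\<^bsub>M\<^esub> = x" by simp
  show "\<And>x. x \<in> carrier M \<Longrightarrow> \<ominus>\<^bsub>M\<^esub> x \<oplus>\<^bsub>M\<^esub> x = \<zero>\<^bsub>M\<^esub>" by (simp add: l_neg)
qed

lemma PiM_module:
  assumes R: "cring R" and M: "\<And>i. i \<in> I \<Longrightarrow> module R (M i)"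
  shows "module R (PiM I M)"
proof (rule moduleI[OF R])
  show "abelian_group (PiM I M)"
  proof (rule abelian_groupI)
    fix x y assume "x \<in> carrier (PiM I M)" "y \<in> carrier (PiM I M)"
    then show "x \<oplus>\<^bsub>PiM I M\<^esub> y \<in> carrier (PiM I M)"
      using M by (auto simp: PiM_def PiE_def Pi_def intro: mod_add_closed)
  next
    show "\<zero>\<^bsub>PiM I M\<^esub> \<in> carrier (PiM I M)"
      using M by (auto simp: PiM_def intro: mod_zero_closed)
  next
    fix x y z assume "x \<in> carrier (PiM I M)" "y \<in> carrier (PiM I M)" "z \<in> carrier (PiM I M)"
    then show "x \<oplus>\<^bsub>PiM I M\<^esub> y \<oplus>\<^bsub>PiM I M\<^esub> z = x \<oplus>\<^bsub>PiM I M\<^esub> (y \<oplus>\<^bsub>PiM I M\<^esub> z)"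
      using M by (auto simp: PiM_def PiE_def Pi_def intro!: ext mod_assoc)
  next
    fix x y assume "x \<in> carrier (PiM I M)" "y \<in> carrier (PiM I M)"
    then show "x \<oplus>\<^bsub>PiM I M\<^esub> y = y \<oplus>\<^bsub>PiM I M\<^esub> x"
      using M by (auto simp: PiM_def PiE_def Pi_def intro!: ext mod_comm)
  next
    fix x assume x: "x \<in> carrier (PiM I M)"
    then show "\<zero>\<^bsub>PiM I M\<^esub> \<oplus>\<^bsub>PiM I M\<^esub> x = x"
      using M by (auto simp: PiM_def PiE_def Pi_def extensional_def
          intro!: ext mod_l_zero)
  next
    fix x assume x: "x \<in> carrier (PiM I M)"
    show "\<exists>y\<in>carrier (PiM I M). y \<oplus>\<^bsub>PiM I M\<^esub> x = \<zero>\<^bsub>PiM I M\<^esub>"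
    proof (intro bexI)
      show "(\<lambda>i\<in>I. \<ominus>\<^bsub>M i\<^esub> x i) \<in> carrier (PiM I M)"
        using x M by (auto simp: PiM_def PiE_def Pi_def
          intro: mod_neg_closed)
      show "(\<lambda>i\<in>I. \<ominus>\<^bsub>M i\<^esub> x i) \<oplus>\<^bsub>PiM I M\<^esub> x = \<zero>\<^bsub>PiM I M\<^esub>"
        using x M by (auto simp: PiM_def PiE_def Pi_def
          intro!: ext mod_l_neg)
    qed
  qed
next
  fix a x assume "a \<in> carrier R" "x \<in> carrier (PiM I M)"
  then show "a \<odot>\<^bsub>PiM I M\<^esub> x \<in> carrier (PiM I M)"
    using M by (auto simp: PiM_def PiE_def Pi_def intro: module.smult_closed)
next
  fix a b x assume "a \<in> carrier R" "b \<in> carrier R" "x \<in> carrier (PiM I M)"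
  then show "(a \<oplus>\<^bsub>R\<^esub> b) \<odot>\<^bsub>PiM I M\<^esub> x = a \<odot>\<^bsub>PiM I M\<^esub> x \<oplus>\<^bsub>PiM I M\<^esub> b \<odot>\<^bsub>PiM I M\<^esub> x"
    using M by (auto simp: PiM_def PiE_def Pi_def intro!: ext module.smult_l_distr)
next
  fix a x y assume "a \<in> carrier R" "x \<in> carrier (PiM I M)" "y \<in> carrier (PiM I M)"
  then show "a \<odot>\<^bsub>PiM I M\<^esub> (x \<oplus>\<^bsub>PiM I M\<^esub> y) = a \<odot>\<^bsub>PiM I M\<^esub> x \<oplus>\<^bsub>PiM I M\<^esub> a \<odot>\<^bsub>PiM I M\<^esub> y"
    using M by (auto simp: PiM_def PiE_def Pi_def intro!: ext module.smult_r_distr)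
next
  fix a b x assume "a \<in> carrier R" "b \<in> carrier R" "x \<in> carrier (PiM I M)"
  then show "(a \<otimes>\<^bsub>R\<^esub> b) \<odot>\<^bsub>PiM I M\<^esub> x = a \<odot>\<^bsub>PiM I M\<^esub> (b \<odot>\<^bsub>PiM I M\<^esub> x)"
    using M by (auto simp: PiM_def PiE_def Pi_def intro!: ext module.smult_assoc1)
next
  fix x assume "x \<in> carrier (PiM I M)"
  then show "\<one>\<^bsub>R\<^esub> \<odot>\<^bsub>PiM I M\<^esub> x = x"
    using M by (auto simp: PiM_def PiE_def Pi_def extensional_def intro!: ext module.smult_one)
qed

definition ProdM :: "('k,'a) module \<Rightarrow> ('k,'b) module \<Rightarrow> ('k, 'a \<times> 'b) module" where
  "ProdM A B = mk_module (carrier A \<times> carrier B) (\<zero>\<^bsub>A\<^esub>, \<zero>\<^bsub>B\<^esub>)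
     (\<lambda>(v, w) (v', w'). (v \<oplus>\<^bsub>A\<^esub> v', w \<oplus>\<^bsub>B\<^esub> w')) (\<lambda>a (v, w). (a \<odot>\<^bsub>A\<^esub> v, a \<odot>\<^bsub>B\<^esub> w))"

lemma ProdM_module:
  assumes R: "cring R" and A: "module R A" and B: "module R B"
  shows "module R (ProdM A B)"
proof (rule moduleI[OF R])
  show "abelian_group (ProdM A B)"
  proof (rule abelian_groupI)
    show "\<And>x y. x \<in> carrier (ProdM A B) \<Longrightarrow> y \<in> carrier (ProdM A B) \<Longrightarrow>
           x \<oplus>\<^bsub>ProdM A B\<^esub> y \<in> carrier (ProdM A B)"
      using A B by (auto simp: ProdM_def intro: mod_add_closed)
    show "\<zero>\<^bsub>ProdM A B\<^esub> \<in> carrier (ProdM A B)"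
      using A B by (auto simp: ProdM_def intro: mod_zero_closed)
    show "\<And>x y z. x \<in> carrier (ProdM A B) \<Longrightarrow> y \<in> carrier (ProdM A B) \<Longrightarrow> z \<in> carrier (ProdM A B) \<Longrightarrow>
      x \<oplus>\<^bsub>ProdM A B\<^esub> y \<oplus>\<^bsub>ProdM A B\<^esub> z = x \<oplus>\<^bsub>ProdM A B\<^esub> (y \<oplus>\<^bsub>ProdM A B\<^esub> z)"
      using A B by (auto simp: ProdM_def intro: mod_assoc)
    show "\<And>x y. x \<in> carrier (ProdM A B) \<Longrightarrow> y \<in> carrier (ProdM A B) \<Longrightarrow>
           x \<oplus>\<^bsub>ProdM A B\<^esub> y = y \<oplus>\<^bsub>ProdM A B\<^esub> x"
      using A B by (auto simp: ProdM_def intro: mod_comm)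
    show "\<And>x. x \<in> carrier (ProdM A B) \<Longrightarrow> \<zero>\<^bsub>ProdM A B\<^esub> \<oplus>\<^bsub>ProdM A B\<^esub> x = x"
      using A B by (auto simp: ProdM_def intro: mod_l_zero)
    fix x assume x: "x \<in> carrier (ProdM A B)"
    then obtain v w where vw: "x = (v, w)" "v \<in> carrier A" "w \<in> carrier B" by (auto simp: ProdM_def)
    show "\<exists>y\<in>carrier (ProdM A B). y \<oplus>\<^bsub>ProdM A B\<^esub> x = \<zero>\<^bsub>ProdM A B\<^esub>"
      by (rule bexI[of _ "(\<ominus>\<^bsub>A\<^esub> v, \<ominus>\<^bsub>B\<^esub> w)"])
         (use vw A B in \<open>auto simp: ProdM_def intro: mod_neg_closed mod_l_neg\<close>)
  qed
qed (use A B in \<open>auto simp: ProdM_def intro: module.smult_closed module.smult_l_distr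
        module.smult_r_distr module.smult_assoc1 module.smult_one\<close>)

lemma submodule_mk:
  assumes M: "module R M" and S: "S \<subseteq> carrier M" and z: "\<zero>\<^bsub>M\<^esub> \<in> S"
    and a: "\<And>x y. x \<in> S \<Longrightarrow> y \<in> S \<Longrightarrow> x \<oplus>\<^bsub>M\<^esub> y \<in> S"
    and sm: "\<And>c x. c \<in> carrier R \<Longrightarrow> x \<in> S \<Longrightarrow> c \<odot>\<^bsub>M\<^esub> x \<in> S"
  shows "module R (M\<lparr>carrier := S\<rparr>)"
proof -
  interpret module R M by fact
  have "submodule S R M"
  proof (rule submoduleI[OF S z _ a sm])
    fix x assume x: "x \<in> S"
    then have xc: "x \<in> carrier M" using S by auto
    have "\<ominus>\<^bsub>M\<^esub> x = (\<ominus>\<^bsub>R\<^esub> \<one>\<^bsub>R\<^esub>) \<odot>\<^bsub>M\<^esub> x"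
      using xc by (simp add: smult_l_minus)
    then show "\<ominus>\<^bsub>M\<^esub> x \<in> S" using sm x by simp
  qed (auto)
  then show ?thesis using submodule.submodule_is_module M by blast
qed

definition Rm :: "('k,'m) ring_scheme \<Rightarrow> ('k,'k) module" where
  "Rm R = mk_module (carrier R) \<zero>\<^bsub>R\<^esub> (add R) (mult R)"

lemma Rm_module: assumes R: "cring R" shows "module R (Rm R)"
proof -
  interpret cring R by fact
  show ?thesis
    by (rule moduleI[OF R]) (auto simp: Rm_def intro!: abelian_groupI a_assoc a_comm l_distr r_distr m_assoc
       intro: l_neg)
qed

lemma finsum_Rm: "finsum (Rm R) f A = finsum R f A"
  by (simp add: finsum_def finprod_def Rm_def)

lemma free_mod_PiM: "free_mod R I = PiM I (\<lambda>_. Rm R)"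
  by (simp add: free_mod_def PiM_def Rm_def)

lemma free_mod_module: "cring R \<Longrightarrow> module R (free_mod R I)"
  by (simp add: free_mod_PiM PiM_module Rm_module)

lemma Q'mod_Prod: "Q'mod V X = ProdM (FMod V X) (PiM X (\<lambda>x. FMod V (X - {x})))"
  by (simp add: Q'mod_def ProdM_def PiM_def)


lemma mh_closed: "f \<in> module_hom R M N \<Longrightarrow> x \<in> carrier M \<Longrightarrow> f x \<in> carrier N"
  by (auto simp: module_hom_def)
lemma mh_add: "f \<in> module_hom R M N \<Longrightarrow> x \<in> carrier M \<Longrightarrow> y \<in> carrier M \<Longrightarrow> f (x \<oplus>\<^bsub>M\<^esub> y) = f x \<oplus>\<^bsub>N\<^esub> f y"
  by (auto simp: module_hom_def)
lemma mh_smult: "f \<in> module_hom R M N \<Longrightarrow> a \<in> carrier R \<Longrightarrow> x \<in> carrier M \<Longrightarrow> f (a \<odot>\<^bsub>M\<^esub> x) = a \<odot>\<^bsub>N\<^esub> f x"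
  by (auto simp: module_hom_def)

lemma mh_zero:
  assumes f: "f \<in> module_hom R M N" and M: "module R M" and N: "module R N"
  shows "f \<zero>\<^bsub>M\<^esub> = \<zero>\<^bsub>N\<^esub>"
proof -
  interpret M: module R M by fact
  interpret N: module R N by fact
  have "f \<zero>\<^bsub>M\<^esub> = f (\<zero>\<^bsub>R\<^esub> \<odot>\<^bsub>M\<^esub> \<zero>\<^bsub>M\<^esub>)" by simp
  also have "\<dots> = \<zero>\<^bsub>R\<^esub> \<odot>\<^bsub>N\<^esub> f \<zero>\<^bsub>M\<^esub>" by (rule mh_smult[OF f]) auto
  also have "\<dots> = \<zero>\<^bsub>N\<^esub>" using mh_closed[OF f M.zero_closed] by simp
  finally show ?thesis .
qed

lemma mh_finsum:
  assumes f: "f \<in> module_hom R M N" and M: "module R M" and N: "module R N"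
    and A: "finite A" and g: "g \<in> A \<rightarrow> carrier M"
  shows "f (\<Oplus>\<^bsub>M\<^esub>i\<in>A. g i) = (\<Oplus>\<^bsub>N\<^esub>i\<in>A. f (g i))"
  using A g
proof (induction A rule: finite_induct)
  case empty
  interpret M: module R M by fact
  interpret N: module R N by fact
  show ?case using mh_zero[OF f M N] by simp
next
  case (insert x F)
  interpret M: module R M by fact
  interpret N: module R N by fact
  have gF: "g \<in> F \<rightarrow> carrier M" and gx: "g x \<in> carrier M" using insert.prems by auto
  have fg: "(\<lambda>i. f (g i)) \<in> F \<rightarrow> carrier N" using gF mh_closed[OF f] by auto
  show ?case using insert gF gx fg mh_closed[OF f]
    by (simp add: M.finsum_insert N.finsum_insert mh_add[OF f] M.finsum_closed)
qed

lemma (in abelian_monoid) fiber_sum: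
  assumes A: "finite A" and c: "c \<in> A \<rightarrow> carrier G" and B: "finite B"
  shows "(\<Oplus>b\<in>B. \<Oplus>a\<in>{a\<in>A. p a = b}. c a) = (\<Oplus>a\<in>{a\<in>A. p a \<in> B}. c a)"
  using B
proof (induction B rule: finite_induct)
  case empty
  then show ?case by simp
next
  case (insert b B)
  have e: "{a\<in>A. p a \<in> insert b B} = {a\<in>A. p a = b} \<union> {a\<in>A. p a \<in> B}" by auto
  have d: "{a\<in>A. p a = b} \<inter> {a\<in>A. p a \<in> B} = {}" using insert by auto
  have cl: "(\<lambda>b. \<Oplus>a\<in>{a\<in>A. p a = b}. c a) \<in> B \<rightarrow> carrier G"
    using c by (auto intro!: finsum_closed)
  have "(\<Oplus>b\<in>insert b B. \<Oplus>a\<in>{a\<in>A. p a = b}. c a)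
     = (\<Oplus>a\<in>{a\<in>A. p a = b}. c a) \<oplus> (\<Oplus>a\<in>{a\<in>A. p a \<in> B}. c a)"
    using insert A c cl by (simp add: finsum_insert finsum_closed Pi_def)
  also have "\<dots> = (\<Oplus>a\<in>{a\<in>A. p a = b} \<union> {a\<in>A. p a \<in> B}. c a)"
    using A c by (intro finsum_Un_disjoint[OF _ _ d, symmetric]) auto
  finally show ?case using e by simp
qed

lemma (in module) finsum_smult_rdistr:
  assumes "finite A" "c \<in> A \<rightarrow> carrier R" "x \<in> carrier M"
  shows "(\<Oplus>\<^bsub>R\<^esub>i\<in>A. c i) \<odot>\<^bsub>M\<^esub> x = (\<Oplus>\<^bsub>M\<^esub>i\<in>A. c i \<odot>\<^bsub>M\<^esub> x)"
  using assms
proof (induction A rule: finite_induct)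
  case empty then show ?case by simp
next
  case (insert a F)
  then have cF: "c \<in> F \<rightarrow> carrier R" and ca: "c a \<in> carrier R" by auto
  then show ?case using insert
    by (simp add: R.finsum_insert finsum_insert smult_l_distr R.finsum_closed Pi_def)
qed

lemma (in module) reindex_sum:
  assumes A: "finite A" and B: "finite B" and p: "p \<in> A \<rightarrow> B" and c: "c \<in> A \<rightarrow> carrier R"
    and F: "F \<in> B \<rightarrow> carrier M"
  shows "(\<Oplus>\<^bsub>M\<^esub>b\<in>B. (\<Oplus>\<^bsub>R\<^esub>a\<in>{a\<in>A. p a = b}. c a) \<odot>\<^bsub>M\<^esub> F b)
       = (\<Oplus>\<^bsub>M\<^esub>a\<in>A. c a \<odot>\<^bsub>M\<^esub> F (p a))"
proof -
  have "(\<Oplus>\<^bsub>M\<^esub>b\<in>B. (\<Oplus>\<^bsub>R\<^esub>a\<in>{a\<in>A. p a = b}. c a) \<odot>\<^bsub>M\<^esub> F b)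
      = (\<Oplus>\<^bsub>M\<^esub>b\<in>B. \<Oplus>\<^bsub>M\<^esub>a\<in>{a\<in>A. p a = b}. c a \<odot>\<^bsub>M\<^esub> F (p a))"
  proof (rule finsum_cong')
    fix b assume b: "b \<in> B"
    have "(\<Oplus>\<^bsub>R\<^esub>a\<in>{a\<in>A. p a = b}. c a) \<odot>\<^bsub>M\<^esub> F b = (\<Oplus>\<^bsub>M\<^esub>a\<in>{a\<in>A. p a = b}. c a \<odot>\<^bsub>M\<^esub> F b)"
      using A c F b by (intro finsum_smult_rdistr) auto
    also have "\<dots> = (\<Oplus>\<^bsub>M\<^esub>a\<in>{a\<in>A. p a = b}. c a \<odot>\<^bsub>M\<^esub> F (p a))"
      using c F b by (intro finsum_cong') auto
    finally show "(\<Oplus>\<^bsub>R\<^esub>a\<in>{a\<in>A. p a = b}. c a) \<odot>\<^bsub>M\<^esub> F b = (\<Oplus>\<^bsub>M\<^esub>a\<in>{a\<in>A. p a = b}. c a \<odot>\<^bsub>M\<^esub> F (p a))" .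
  next
    show "(\<lambda>b. \<Oplus>\<^bsub>M\<^esub>a\<in>{a \<in> A. p a = b}. c a \<odot>\<^bsub>M\<^esub> F (p a)) \<in> B \<rightarrow> carrier M"
      using c F p by (auto intro!: finsum_closed)
  qed simp
  also have "\<dots> = (\<Oplus>\<^bsub>M\<^esub>a\<in>{a\<in>A. p a \<in> B}. c a \<odot>\<^bsub>M\<^esub> F (p a))"
    using A B c F p by (intro fiber_sum) auto
  also have "{a\<in>A. p a \<in> B} = A" using p by auto
  finally show ?thesis .
qed

lemma (in module) delta_sum:
  assumes I: "finite I" and h0: "h0 \<in> I" and F: "F \<in> I \<rightarrow> carrier M"
  shows "(\<Oplus>\<^bsub>M\<^esub>h\<in>I. (if h = h0 then \<one>\<^bsub>R\<^esub> else \<zero>\<^bsub>R\<^esub>) \<odot>\<^bsub>M\<^esub> F h) = F h0"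
proof -
  have "(\<Oplus>\<^bsub>M\<^esub>h\<in>I. (if h = h0 then \<one>\<^bsub>R\<^esub> else \<zero>\<^bsub>R\<^esub>) \<odot>\<^bsub>M\<^esub> F h)
      = (\<Oplus>\<^bsub>M\<^esub>h\<in>I. if h0 = h then F h else \<zero>\<^bsub>M\<^esub>)"
    using F by (intro finsum_cong') (auto simp: Pi_def)
  also have "\<dots> = F h0" using finsum_singleton[OF h0 I F] .
  finally show ?thesis .
qed


section \<open>Combinatorics of injections\<close>

lemma finite_FIm: "finite X \<Longrightarrow> finite Y \<Longrightarrow> finite (FIm X Y)"
  unfolding FIm_def by (rule finite_subset[of _ "X \<rightarrow>\<^sub>E Y"]) (auto intro: finite_PiE)

lemma finite_sig[simp]: "finite Z \<Longrightarrow> finite (sig Z)"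
  by (simp add: sig_def)

lemma FIm_compose: "f \<in> FIm X Y \<Longrightarrow> g \<in> FIm Y Z \<Longrightarrow> compose X g f \<in> FIm X Z"
  unfolding FIm_def compose_def
  by (auto simp: PiE_def Pi_def inj_on_def)

lemma FImD: "f \<in> FIm X Y \<Longrightarrow> x \<in> X \<Longrightarrow> f x \<in> Y"
  and FIm_inj: "f \<in> FIm X Y \<Longrightarrow> inj_on f X"
  and FIm_ext: "f \<in> FIm X Y \<Longrightarrow> x \<notin> X \<Longrightarrow> f x = undefined"
  by (auto simp: FIm_def PiE_def extensional_def)

lemma FImI: "(\<And>x. x \<in> X \<Longrightarrow> f x \<in> Y) \<Longrightarrow> inj_on f X \<Longrightarrow> f \<in> extensional X \<Longrightarrow> f \<in> FIm X Y"
  by (auto simp: FIm_def PiE_def)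

lemma FIm_eqI: "f \<in> FIm X Y \<Longrightarrow> g \<in> FIm X Z \<Longrightarrow> (\<And>x. x \<in> X \<Longrightarrow> f x = g x) \<Longrightarrow> f = g"
  by (auto simp: FIm_def PiE_def intro: extensionalityI)

lemma sigf_FIm: "g \<in> FIm Z W \<Longrightarrow> sigf Z g \<in> FIm (sig Z) (sig W)"
  unfolding FIm_def sigf_def sig_def by (auto simp: PiE_def Pi_def inj_on_def)

lemma mem_sig: "n \<in> sig Z \<longleftrightarrow> n = 0 \<or> (n \<noteq> 0 \<and> n - 1 \<in> Z)"
  by (cases n) (auto simp: sig_def)

definition sgm :: "nat set \<Rightarrow> nat \<Rightarrow> nat" where "sgm X = (\<lambda>x\<in>X. Suc x)"
definition tau :: "nat set \<Rightarrow> nat \<Rightarrow> nat \<Rightarrow> nat" where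
  "tau X x0 = (\<lambda>x\<in>X. if x = x0 then 0 else Suc x)"

lemma sgm_FIm: "sgm X \<in> FIm X (sig X)"
  by (auto simp: sgm_def sig_def intro!: FImI inj_onI)

lemma tau_FIm: "tau X x0 \<in> FIm X (sig (X - {x0}))"
  by (auto simp: tau_def sig_def intro!: FImI inj_onI split: if_splits)

lemma lower_FIm:
  assumes h: "h \<in> FIm X (sig Z)" and S: "S \<subseteq> X" and nz: "\<And>x. x \<in> S \<Longrightarrow> h x \<noteq> 0"
  shows "(\<lambda>x\<in>S. h x - 1) \<in> FIm S Z"
proof (rule FImI)
  fix x assume "x \<in> S"
  then show "(\<lambda>x\<in>S. h x - 1) x \<in> Z" using FImD[OF h, of x] S nz by (auto simp: mem_sig)
next
  show "inj_on (\<lambda>x\<in>S. h x - 1) S"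
  proof (rule inj_onI)
    fix x y assume xy: "x \<in> S" "y \<in> S" "(\<lambda>x\<in>S. h x - 1) x = (\<lambda>x\<in>S. h x - 1) y"
    then have "h x = h y" using nz[of x] nz[of y] by simp
    then show "x = y" using FIm_inj[OF h] xy S by (auto dest: inj_onD)
  qed
qed auto

lemma lower_sgm:
  assumes h: "h \<in> FIm X (sig Z)" and nz: "0 \<notin> h ` X"
  shows "compose X (sigf X (\<lambda>x\<in>X. h x - 1)) (sgm X) = h"
proof (rule FIm_eqI[OF _ h])
  show "compose X (sigf X (\<lambda>x\<in>X. h x - 1)) (sgm X) \<in> FIm X (sig Z)"
    using FIm_compose[OF sgm_FIm sigf_FIm[OF lower_FIm[OF h order_refl]]] nz by force
  fix x assume x: "x \<in> X"
  have "h x \<noteq> 0" using nz x by force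
  then show "compose X (sigf X (\<lambda>x\<in>X. h x - 1)) (sgm X) x = h x"
    using x by (simp add: compose_def sigf_def sgm_def sig_def)
qed

lemma lower_tau:
  assumes h: "h \<in> FIm X (sig Z)" and x0: "x0 \<in> X" "h x0 = 0"
  shows "compose X (sigf (X - {x0}) (\<lambda>x\<in>X - {x0}. h x - 1)) (tau X x0) = h"
proof -
  have nz: "\<And>x. x \<in> X - {x0} \<Longrightarrow> h x \<noteq> 0"
    using FIm_inj[OF h] x0 by (metis DiffE inj_onD singletonI)
  show ?thesis
  proof (rule FIm_eqI[OF _ h])
    show "compose X (sigf (X - {x0}) (\<lambda>x\<in>X - {x0}. h x - 1)) (tau X x0) \<in> FIm X (sig Z)"
      using FIm_compose[OF tau_FIm sigf_FIm[OF lower_FIm[OF h _ nz]]] by force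
    fix x assume x: "x \<in> X"
    then show "compose X (sigf (X - {x0}) (\<lambda>x\<in>X - {x0}. h x - 1)) (tau X x0) x = h x"
      using x0 nz[of x] by (auto simp: compose_def sigf_def tau_def sig_def)
  qed
qed


section \<open>Free modules and deltas\<close>

definition dlt :: "('k,'m) ring_scheme \<Rightarrow> 'i set \<Rightarrow> 'i \<Rightarrow> 'i \<Rightarrow> 'k" where
  "dlt R I h0 = (\<lambda>h\<in>I. if h = h0 then \<one>\<^bsub>R\<^esub> else \<zero>\<^bsub>R\<^esub>)"

lemma carrier_free_mod[simp]: "carrier (free_mod R I) = I \<rightarrow>\<^sub>E carrier R"
  by (simp add: free_mod_def)
lemma free_mod_ops:
  "zero (free_mod R I) = (\<lambda>i\<in>I. \<zero>\<^bsub>R\<^esub>)"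
  "add (free_mod R I) = (\<lambda>c d. \<lambda>i\<in>I. c i \<oplus>\<^bsub>R\<^esub> d i)"
  "smult (free_mod R I) = (\<lambda>a c. \<lambda>i\<in>I. a \<otimes>\<^bsub>R\<^esub> c i)"
  by (simp_all add: free_mod_def)

lemma FMod_ShiftM[simp]: "FMod (Shift (Mfree R X)) Z = free_mod R (FIm X (sig Z))"
  by (simp add: Shift_def Mfree_def)
lemma FAct_ShiftM[simp]: "FAct (Shift (Mfree R X)) Z W g = (\<lambda>c. \<lambda>h\<in>FIm X (sig W).
        \<Oplus>\<^bsub>R\<^esub>h'\<in>{h' \<in> FIm X (sig Z). compose X (sigf Z g) h' = h}. c h')"
  by (simp add: Shift_def Mfree_def)

lemma dlt_carrier: assumes "cring R" shows "dlt R I h \<in> carrier (free_mod R I)"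
proof -
  interpret cring R by fact
  show ?thesis by (auto simp: dlt_def)
qed

lemma push_delta:
  assumes R: "cring R" and H: "finite H" and h: "h \<in> H" and p: "p h \<in> K"
  shows "(\<lambda>k\<in>K. \<Oplus>\<^bsub>R\<^esub>h'\<in>{h'\<in>H. p h' = k}. dlt R H h h') = dlt R K (p h)"
proof (rule ext)
  interpret cring R by fact
  fix k
  show "(\<lambda>k\<in>K. \<Oplus>\<^bsub>R\<^esub>h'\<in>{h'\<in>H. p h' = k}. dlt R H h h') k = dlt R K (p h) k"
  proof (cases "k \<in> K")
    case True
    have "(\<Oplus>\<^bsub>R\<^esub>h'\<in>{h'\<in>H. p h' = k}. dlt R H h h')
        = (\<Oplus>\<^bsub>R\<^esub>h'\<in>{h'\<in>H. p h' = k}. if h' = h then \<one>\<^bsub>R\<^esub> else \<zero>\<^bsub>R\<^esub>)"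
      by (intro finsum_cong') (auto simp: dlt_def)
    also have "\<dots> = (if p h = k then \<one>\<^bsub>R\<^esub> else \<zero>\<^bsub>R\<^esub>)"
    proof (cases "p h = k")
      case True
      then show ?thesis using add.finprod_singleton_swap[of h "{h'\<in>H. p h' = k}" "\<lambda>_. \<one>\<^bsub>R\<^esub>"] H h
        by auto
    next
      case False
      then have "(\<Oplus>\<^bsub>R\<^esub>h'\<in>{h'\<in>H. p h' = k}. if h' = h then \<one>\<^bsub>R\<^esub> else \<zero>\<^bsub>R\<^esub>)
               = (\<Oplus>\<^bsub>R\<^esub>h'\<in>{h'\<in>H. p h' = k}. \<zero>\<^bsub>R\<^esub>)"
        by (intro finsum_cong') auto
      then show ?thesis using False by simp
    qed
    finally show ?thesis using True by (simp add: dlt_def)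
  next
    case False
    then show ?thesis by (simp add: dlt_def)
  qed
qed

lemma push_dlt:
  assumes R: "cring R" and X: "finite X" and Z: "finite Z" and g: "g \<in> FIm Z W"
    and h: "h \<in> FIm X (sig Z)"
  shows "FAct (Shift (Mfree R X)) Z W g (dlt R (FIm X (sig Z)) h)
       = dlt R (FIm X (sig W)) (compose X (sigf Z g) h)"
  using push_delta[OF R finite_FIm[OF X finite_sig[OF Z]] h,
      of "compose X (sigf Z g)" "FIm X (sig W)"] FIm_compose[OF h sigf_FIm[OF g]]
  by simp

lemma rho_dlt:
  assumes R: "cring R" and Y: "finite Y" and Z: "finite Z" and f: "f \<in> FIm X Y"
    and g: "g \<in> FIm Y Z"
  shows "rho R X Y f Z (dlt R (FIm Y Z) g) = dlt R (FIm X Z) (compose X g f)"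
  unfolding rho_def
  using push_delta[OF R finite_FIm[OF Y Z] g, of "\<lambda>g. compose X g f" "FIm X Z"] FIm_compose[OF f g]
  by simp

lemma PiM_finsum_apply:
  assumes R: "cring R" and M: "\<And>i. i \<in> I \<Longrightarrow> module R (M i)" and J: "finite J"
    and F: "F \<in> J \<rightarrow> carrier (PiM I M)" and i: "i \<in> I"
  shows "(\<Oplus>\<^bsub>PiM I M\<^esub>j\<in>J. F j) i = (\<Oplus>\<^bsub>M i\<^esub>j\<in>J. F j i)"
  using J F
proof (induction J rule: finite_induct)
  case empty
  interpret P: module R "PiM I M" by (rule PiM_module[OF R M])
  interpret Mi: module R "M i" by (rule M[OF i])
  show ?case using i by (simp only: P.finsum_empty Mi.finsum_empty) (simp add: PiM_def)
next
  case (insert x J)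
  interpret P: module R "PiM I M" by (rule PiM_module[OF R M])
  interpret Mi: module R "M i" by (rule M[OF i])
  have FJ: "F \<in> J \<rightarrow> carrier (PiM I M)" and Fx: "F x \<in> carrier (PiM I M)" using insert.prems by auto
  have FJi: "(\<lambda>j. F j i) \<in> J \<rightarrow> carrier (M i)" using FJ i by (auto simp: PiM_def)
  have Fxi: "F x i \<in> carrier (M i)" using Fx i by (auto simp: PiM_def)
  have "(\<Oplus>\<^bsub>PiM I M\<^esub>j\<in>insert x J. F j) = F x \<oplus>\<^bsub>PiM I M\<^esub> (\<Oplus>\<^bsub>PiM I M\<^esub>j\<in>J. F j)"
    using insert FJ Fx by (simp add: P.finsum_insert)
  then have "(\<Oplus>\<^bsub>PiM I M\<^esub>j\<in>insert x J. F j) i = F x i \<oplus>\<^bsub>M i\<^esub> (\<Oplus>\<^bsub>PiM I M\<^esub>j\<in>J. F j) i"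
    using i by (simp add: PiM_def)
  also have "\<dots> = F x i \<oplus>\<^bsub>M i\<^esub> (\<Oplus>\<^bsub>M i\<^esub>j\<in>J. F j i)" using insert.IH[OF FJ] by simp
  also have "\<dots> = (\<Oplus>\<^bsub>M i\<^esub>j\<in>insert x J. F j i)"
    using insert FJi Fxi by (simp add: Mi.finsum_insert)
  finally show ?case .
qed

lemma free_decomp:
  assumes R: "cring R" and I: "finite I" and c: "c \<in> carrier (free_mod R I)"
  shows "c = (\<Oplus>\<^bsub>free_mod R I\<^esub>h\<in>I. c h \<odot>\<^bsub>free_mod R I\<^esub> dlt R I h)"
proof -
  interpret cring R by fact
  interpret F: module R "free_mod R I" by (rule free_mod_module[OF R])
  have cl: "(\<lambda>h. c h \<odot>\<^bsub>free_mod R I\<^esub> dlt R I h) \<in> I \<rightarrow> carrier (free_mod R I)"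
  proof (rule Pi_I)
    fix h assume h: "h \<in> I"
    then have "c h \<in> carrier R" using c by (auto simp: PiE_def)
    then show "c h \<odot>\<^bsub>free_mod R I\<^esub> dlt R I h \<in> carrier (free_mod R I)"
      by (intro F.smult_closed dlt_carrier[OF R])
  qed
  have s: "(\<Oplus>\<^bsub>free_mod R I\<^esub>h\<in>I. c h \<odot>\<^bsub>free_mod R I\<^esub> dlt R I h) \<in> carrier (free_mod R I)"
    using cl by (rule F.finsum_closed)
  show ?thesis
  proof (rule extensionalityI[of _ I])
    show "c \<in> extensional I" using c by (simp add: PiE_def)
    show "(\<Oplus>\<^bsub>free_mod R I\<^esub>h\<in>I. c h \<odot>\<^bsub>free_mod R I\<^esub> dlt R I h) \<in> extensional I"
      using s by (simp add: PiE_def)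
    fix k assume k: "k \<in> I"
    have "(\<Oplus>\<^bsub>free_mod R I\<^esub>h\<in>I. c h \<odot>\<^bsub>free_mod R I\<^esub> dlt R I h) k
        = (\<Oplus>\<^bsub>Rm R\<^esub>h\<in>I. (c h \<odot>\<^bsub>free_mod R I\<^esub> dlt R I h) k)"
      using PiM_finsum_apply[OF R Rm_module[OF R] I _ k, of "\<lambda>h. c h \<odot>\<^bsub>free_mod R I\<^esub> dlt R I h"] cl
      by (simp add: free_mod_PiM)
    also have "\<dots> = (\<Oplus>\<^bsub>R\<^esub>h\<in>I. (c h \<odot>\<^bsub>free_mod R I\<^esub> dlt R I h) k)"
      by (rule finsum_Rm)
    also have "\<dots> = (\<Oplus>\<^bsub>R\<^esub>h\<in>I. if k = h then c h else \<zero>\<^bsub>R\<^esub>)"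
      using k c
      by (intro finsum_cong') (auto simp: dlt_def PiE_def Pi_def free_mod_ops)
    also have "\<dots> = c k" using add.finprod_singleton[of k I c] k I c by (auto simp: PiE_def)
    finally show "c k = (\<Oplus>\<^bsub>free_mod R I\<^esub>h\<in>I. c h \<odot>\<^bsub>free_mod R I\<^esub> dlt R I h) k" by simp
  qed
qed

lemma lin_free:
  assumes R: "cring R" and I: "finite I" and N: "module R N"
    and f: "f \<in> module_hom R (free_mod R I) N" and c: "c \<in> carrier (free_mod R I)"
  shows "f c = (\<Oplus>\<^bsub>N\<^esub>h\<in>I. c h \<odot>\<^bsub>N\<^esub> f (dlt R I h))"
proof -
  interpret F: module R "free_mod R I" by (rule free_mod_module[OF R])
  have cl: "(\<lambda>h. c h \<odot>\<^bsub>free_mod R I\<^esub> dlt R I h) \<in> I \<rightarrow> carrier (free_mod R I)"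
  proof (rule Pi_I)
    fix h assume h: "h \<in> I"
    then have "c h \<in> carrier R" using c by (auto simp: PiE_def)
    then show "c h \<odot>\<^bsub>free_mod R I\<^esub> dlt R I h \<in> carrier (free_mod R I)"
      by (intro F.smult_closed dlt_carrier[OF R])
  qed
  have "f c = f (\<Oplus>\<^bsub>free_mod R I\<^esub>h\<in>I. c h \<odot>\<^bsub>free_mod R I\<^esub> dlt R I h)"
    using free_decomp[OF R I c] by simp
  also have "\<dots> = (\<Oplus>\<^bsub>N\<^esub>h\<in>I. f (c h \<odot>\<^bsub>free_mod R I\<^esub> dlt R I h))"
    by (rule mh_finsum[OF f free_mod_module[OF R] N I cl])
  also have "\<dots> = (\<Oplus>\<^bsub>N\<^esub>h\<in>I. c h \<odot>\<^bsub>N\<^esub> f (dlt R I h))"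
    using c dlt_carrier[OF R] PiE_mem[OF c[unfolded carrier_free_mod]]
    by (intro abelian_monoid.finsum_cong'[OF abelian_group.axioms(1)[OF module.axioms(2)[OF N]]]) (auto intro!: mh_smult[OF f] mh_closed[OF f]
          module.smult_closed[OF N] simp del: carrier_free_mod)
  finally show ?thesis .
qed




lemma FI_mod: "is_FI_module R V \<Longrightarrow> finite X \<Longrightarrow> module R (FMod V X)"
  by (simp add: is_FI_module_def)
lemma FI_hom: "is_FI_module R V \<Longrightarrow> finite X \<Longrightarrow> finite Y \<Longrightarrow> f \<in> FIm X Y \<Longrightarrow>
    FAct V X Y f \<in> module_hom R (FMod V X) (FMod V Y)"
  by (simp add: is_FI_module_def)
lemma FI_id: "is_FI_module R V \<Longrightarrow> finite X \<Longrightarrow> v \<in> carrier (FMod V X) \<Longrightarrow>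
    FAct V X X (restrict id X) v = v"
  by (simp add: is_FI_module_def)
lemma FI_comp: assumes "is_FI_module R V" "finite X" "finite Y" "finite Z"
    "f \<in> FIm X Y" "g \<in> FIm Y Z" "v \<in> carrier (FMod V X)"
  shows "FAct V X Z (compose X g f) v = FAct V Y Z g (FAct V X Y f v)"
proof -
  have "\<forall>X Y Z f g. finite X \<longrightarrow> finite Y \<longrightarrow> finite Z \<longrightarrow> f \<in> FIm X Y \<longrightarrow> g \<in> FIm Y Z \<longrightarrow>
        (\<forall>v\<in>carrier (FMod V X).
           FAct V X Z (compose X g f) v = FAct V Y Z g (FAct V X Y f v))"
    using assms(1) unfolding is_FI_module_def by (elim conjE)
  then show ?thesis using assms(2-) by simp
qed

lemma FI_closed: "is_FI_module R V \<Longrightarrow> finite X \<Longrightarrow> finite Y \<Longrightarrow> f \<in> FIm X Y \<Longrightarrow>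
    v \<in> carrier (FMod V X) \<Longrightarrow> FAct V X Y f v \<in> carrier (FMod V Y)"
  by (rule mh_closed[OF FI_hom])

definition val :: "('k,'v) fimod \<Rightarrow> nat set \<Rightarrow> nat set \<Rightarrow> 'v \<Rightarrow> (nat \<Rightarrow> 'v) \<Rightarrow> (nat \<Rightarrow> nat) \<Rightarrow> 'v" where
  "val V X Z v w h = (if 0 \<in> h ` X then
      FAct V (X - {the_inv_into X h 0}) Z (\<lambda>x\<in>X - {the_inv_into X h 0}. h x - 1) (w (the_inv_into X h 0))
    else FAct V X Z (\<lambda>x\<in>X. h x - 1) v)"

lemma val1: "0 \<notin> h ` X \<Longrightarrow> val V X Z v w h = FAct V X Z (\<lambda>x\<in>X. h x - 1) v"
  by (simp add: val_def)

lemma val2: assumes h: "h \<in> FIm X (sig Z)" and x0: "x0 \<in> X" "h x0 = 0"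
  shows "val V X Z v w h = FAct V (X - {x0}) Z (\<lambda>x\<in>X - {x0}. h x - 1) (w x0)"
proof -
  have "the_inv_into X h 0 = x0"
    using the_inv_into_f_f[OF FIm_inj[OF h] x0(1)] x0 by simp
  then show ?thesis using x0 by (auto simp: val_def)
qed

lemma nz_rest: assumes h: "h \<in> FIm X (sig Z)" and x0: "x0 \<in> X" "h x0 = 0"
  shows "\<And>x. x \<in> X - {x0} \<Longrightarrow> h x \<noteq> 0"
  using FIm_inj[OF h] x0 by (metis DiffE inj_onD singletonI)

context
  fixes R :: "('k,'m) ring_scheme" and V :: "('k,'v) fimod"
  assumes R: "cring R" and V: "is_FI_module R V"
begin

lemma val_closed:
  assumes X: "finite X" and Z: "finite Z" and h: "h \<in> FIm X (sig Z)"
    and v: "v \<in> carrier (FMod V X)" and w: "w \<in> (\<Pi>\<^sub>E x\<in>X. carrier (FMod V (X - {x})))"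
  shows "val V X Z v w h \<in> carrier (FMod V Z)"
proof (cases "0 \<in> h ` X")
  case True
  then obtain x0 where x0: "x0 \<in> X" "h x0 = 0" by auto
  show ?thesis unfolding val2[OF h x0]
    by (rule FI_closed[OF V _ Z lower_FIm[OF h _ nz_rest[OF h x0]]]) (use X x0 w in auto)
next
  case False
  show ?thesis unfolding val1[OF False]
    by (rule FI_closed[OF V X Z lower_FIm[OF h order_refl]]) (use False v in \<open>auto simp: image_iff\<close>)
qed

lemma val_nat:
  assumes X: "finite X" and Z: "finite Z" and W: "finite W" and h: "h \<in> FIm X (sig Z)"
    and g: "g \<in> FIm Z W"
    and v: "v \<in> carrier (FMod V X)" and w: "w \<in> (\<Pi>\<^sub>E x\<in>X. carrier (FMod V (X - {x})))"
  shows "val V X W v w (compose X (sigf Z g) h) = FAct V Z W g (val V X Z v w h)"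
proof (cases "0 \<in> h ` X")
  case True
  then obtain x0 where x0: "x0 \<in> X" "h x0 = 0" by auto
  let ?k = "compose X (sigf Z g) h"
  have k: "?k \<in> FIm X (sig W)" by (rule FIm_compose[OF h sigf_FIm[OF g]])
  have k0: "?k x0 = 0" using x0 by (simp add: compose_def sigf_def sig_def)
  have nz: "\<And>x. x \<in> X - {x0} \<Longrightarrow> h x \<noteq> 0" by (rule nz_rest[OF h x0])
  have hx: "\<And>x. x \<in> X - {x0} \<Longrightarrow> h x - 1 \<in> Z"
    using FImD[OF h] nz by (metis DiffD1 One_nat_def mem_sig)
  have eq: "(\<lambda>x\<in>X - {x0}. ?k x - 1) = compose (X - {x0}) g (\<lambda>x\<in>X - {x0}. h x - 1)"
  proof (rule ext)
    fix x show "(\<lambda>x\<in>X - {x0}. ?k x - 1) x = compose (X - {x0}) g (\<lambda>x\<in>X - {x0}. h x - 1) x"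
    proof (cases "x \<in> X - {x0}")
      case True
      then have "h x \<noteq> 0" "h x \<in> sig Z" using nz FImD[OF h] by auto
      then show ?thesis using True by (auto simp: compose_def sigf_def)
    next
      case False
      then show ?thesis by (auto simp: compose_def)
    qed
  qed
  show ?thesis
    unfolding val2[OF k x0(1) k0] val2[OF h x0] eq
    by (rule FI_comp[OF V _ Z W lower_FIm[OF h _ nz] g]) (use X x0 w in auto)
next
  case False
  let ?k = "compose X (sigf Z g) h"
  have k: "?k \<in> FIm X (sig W)" by (rule FIm_compose[OF h sigf_FIm[OF g]])
  have nz: "\<And>x. x \<in> X \<Longrightarrow> h x \<noteq> 0" using False by force
  have k0: "0 \<notin> ?k ` X"
  proof
    assume "0 \<in> ?k ` X"
    then obtain x where x: "x \<in> X" "?k x = 0" by auto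
    then have "h x \<noteq> 0" "h x \<in> sig Z" using nz FImD[OF h] by auto
    then show False using x by (simp add: compose_def sigf_def)
  qed
  have eq: "(\<lambda>x\<in>X. ?k x - 1) = compose X g (\<lambda>x\<in>X. h x - 1)"
  proof (rule ext)
    fix x show "(\<lambda>x\<in>X. ?k x - 1) x = compose X g (\<lambda>x\<in>X. h x - 1) x"
    proof (cases "x \<in> X")
      case True
      then have "h x \<noteq> 0" "h x \<in> sig Z" using nz FImD[OF h] by auto
      then show ?thesis using True by (auto simp: compose_def sigf_def)
    next
      case False
      then show ?thesis by (auto simp: compose_def)
    qed
  qed
  show ?thesis
    unfolding val1[OF k0] val1[OF False] eq
    by (rule FI_comp[OF V X Z W lower_FIm[OF h order_refl nz] g v])
qed

end


section \<open>The inverse map\<close>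

definition bld :: "('k,'m) ring_scheme \<Rightarrow> ('k,'v) fimod \<Rightarrow> nat set \<Rightarrow> 'v \<times> (nat \<Rightarrow> 'v)
    \<Rightarrow> (nat set \<Rightarrow> ((nat \<Rightarrow> nat) \<Rightarrow> 'k) \<Rightarrow> 'v)" where
  "bld R V X vw = (\<lambda>Z\<in>{Z. finite Z}. \<lambda>c\<in>carrier (free_mod R (FIm X (sig Z))).
      \<Oplus>\<^bsub>FMod V Z\<^esub>h\<in>FIm X (sig Z). c h \<odot>\<^bsub>FMod V Z\<^esub> val V X Z (fst vw) (snd vw) h)"

definition eta :: "('k,'m) ring_scheme \<Rightarrow> nat set \<Rightarrow> (nat set \<Rightarrow> ((nat \<Rightarrow> nat) \<Rightarrow> 'k) \<Rightarrow> 'v)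
    \<Rightarrow> 'v \<times> (nat \<Rightarrow> 'v)" where
  "eta R X \<phi> = (\<phi> X (dlt R (FIm X (sig X)) (sgm X)),
      \<lambda>x\<in>X. \<phi> (X - {x}) (dlt R (FIm X (sig (X - {x}))) (tau X x)))"

lemma carrier_Qmod: "carrier (Qmod R V X) = FIHomE R (Shift (Mfree R X)) V"
  by (simp add: Qmod_def)

lemma carrier_Q'mod: "carrier (Q'mod V X) = carrier (FMod V X) \<times> (\<Pi>\<^sub>E x\<in>X. carrier (FMod V (X - {x})))"
  by (simp add: Q'mod_def)

context
  fixes R :: "('k,'m) ring_scheme" and V :: "('k,'v) fimod"
  assumes R: "cring R" and V: "is_FI_module R V"
begin

lemma bld_apply:
  "finite Z \<Longrightarrow> c \<in> carrier (free_mod R (FIm X (sig Z))) \<Longrightarrow>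
   bld R V X vw Z c = (\<Oplus>\<^bsub>FMod V Z\<^esub>h\<in>FIm X (sig Z). c h \<odot>\<^bsub>FMod V Z\<^esub> val V X Z (fst vw) (snd vw) h)"
  by (simp add: bld_def del: carrier_free_mod)

lemma bld_hom:
  assumes X: "finite X" and vw: "vw \<in> carrier (Q'mod V X)"
  shows "bld R V X vw \<in> FIHomE R (Shift (Mfree R X)) V"
proof -
  interpret R: cring R by (rule R)
  obtain v w where vw': "vw = (v, w)" "v \<in> carrier (FMod V X)"
    "w \<in> (\<Pi>\<^sub>E x\<in>X. carrier (FMod V (X - {x})))"
    using vw by (auto simp: carrier_Q'mod)
  have valc: "\<And>Z h. finite Z \<Longrightarrow> h \<in> FIm X (sig Z) \<Longrightarrow> val V X Z v w h \<in> carrier (FMod V Z)"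
    using val_closed[OF R V X _ _ vw'(2,3)] by blast
  have hom: "bld R V X vw Z \<in> module_hom R (FMod (Shift (Mfree R X)) Z) (FMod V Z)" if Z: "finite Z" for Z
  proof -
    interpret VZ: module R "FMod V Z" by (rule FI_mod[OF V Z])
    interpret F: module R "free_mod R (FIm X (sig Z))" by (rule free_mod_module[OF R])
    let ?H = "FIm X (sig Z)"
    have H: "finite ?H" using finite_FIm[OF X finite_sig[OF Z]] .
    have cR: "\<And>c h. c \<in> carrier (free_mod R ?H) \<Longrightarrow> h \<in> ?H \<Longrightarrow> c h \<in> carrier R"
      by (auto simp: PiE_def)
    have cl: "\<And>c. c \<in> carrier (free_mod R ?H) \<Longrightarrow>
       (\<lambda>h. c h \<odot>\<^bsub>FMod V Z\<^esub> val V X Z v w h) \<in> ?H \<rightarrow> carrier (FMod V Z)"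
      using cR valc[OF Z] by auto
    show ?thesis unfolding module_hom_def
    proof (intro CollectI conjI ballI Pi_I)
      fix c assume c: "c \<in> carrier (FMod (Shift (Mfree R X)) Z)"
      then show "bld R V X vw Z c \<in> carrier (FMod V Z)"
        using Z cl[of c] by (simp add: bld_apply vw'(1) VZ.finsum_closed del: carrier_free_mod)
    next
      fix c d assume c: "c \<in> carrier (FMod (Shift (Mfree R X)) Z)"
        and d: "d \<in> carrier (FMod (Shift (Mfree R X)) Z)"
      have cd: "c \<oplus>\<^bsub>free_mod R ?H\<^esub> d \<in> carrier (free_mod R ?H)"
        by (rule F.a_closed) (use c d in simp_all)
      have "bld R V X vw Z (c \<oplus>\<^bsub>FMod (Shift (Mfree R X)) Z\<^esub> d)
          = (\<Oplus>\<^bsub>FMod V Z\<^esub>h\<in>?H. (c h \<oplus>\<^bsub>R\<^esub> d h) \<odot>\<^bsub>FMod V Z\<^esub> val V X Z v w h)"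
        using Z cd cR[OF c[unfolded FMod_ShiftM]] cR[OF d[unfolded FMod_ShiftM]] valc[OF Z]
        by (simp add: bld_apply vw'(1) free_mod_ops del: carrier_free_mod) (intro VZ.finsum_cong', auto)
      also have "\<dots> = (\<Oplus>\<^bsub>FMod V Z\<^esub>h\<in>?H. c h \<odot>\<^bsub>FMod V Z\<^esub> val V X Z v w h
                   \<oplus>\<^bsub>FMod V Z\<^esub> d h \<odot>\<^bsub>FMod V Z\<^esub> val V X Z v w h)"
        using cR[OF c[unfolded FMod_ShiftM]] cR[OF d[unfolded FMod_ShiftM]] valc[OF Z]
        by (intro VZ.finsum_cong') (auto intro: VZ.smult_l_distr)
      also have "\<dots> = bld R V X vw Z c \<oplus>\<^bsub>FMod V Z\<^esub> bld R V X vw Z d"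
        using Z c d cl[of c] cl[of d] by (simp add: bld_apply vw'(1) VZ.finsum_addf del: carrier_free_mod)
      finally show "bld R V X vw Z (c \<oplus>\<^bsub>FMod (Shift (Mfree R X)) Z\<^esub> d)
          = bld R V X vw Z c \<oplus>\<^bsub>FMod V Z\<^esub> bld R V X vw Z d" .
    next
      fix a c assume a: "a \<in> carrier R" and c: "c \<in> carrier (FMod (Shift (Mfree R X)) Z)"
      have ac: "a \<odot>\<^bsub>free_mod R ?H\<^esub> c \<in> carrier (free_mod R ?H)"
        by (rule F.smult_closed) (use a c in simp_all)
      have "bld R V X vw Z (a \<odot>\<^bsub>FMod (Shift (Mfree R X)) Z\<^esub> c)
          = (\<Oplus>\<^bsub>FMod V Z\<^esub>h\<in>?H. (a \<otimes>\<^bsub>R\<^esub> c h) \<odot>\<^bsub>FMod V Z\<^esub> val V X Z v w h)"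
        using Z ac cR[OF c[unfolded FMod_ShiftM]] valc[OF Z] a
        by (simp add: bld_apply vw'(1) free_mod_ops del: carrier_free_mod) (intro VZ.finsum_cong', auto)
      also have "\<dots> = (\<Oplus>\<^bsub>FMod V Z\<^esub>h\<in>?H. a \<odot>\<^bsub>FMod V Z\<^esub> (c h \<odot>\<^bsub>FMod V Z\<^esub> val V X Z v w h))"
        using cR[OF c[unfolded FMod_ShiftM]] valc[OF Z] a
        by (intro VZ.finsum_cong') (auto intro: VZ.smult_assoc1)
      also have "\<dots> = a \<odot>\<^bsub>FMod V Z\<^esub> bld R V X vw Z c"
        using Z c cl[of c] a H
        by (simp add: bld_apply vw'(1) VZ.finsum_smult_ldistr del: carrier_free_mod)
      finally show "bld R V X vw Z (a \<odot>\<^bsub>FMod (Shift (Mfree R X)) Z\<^esub> c)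
          = a \<odot>\<^bsub>FMod V Z\<^esub> bld R V X vw Z c" .
    qed
  qed
  have nat: "bld R V X vw W (FAct (Shift (Mfree R X)) Z W g c) = FAct V Z W g (bld R V X vw Z c)"
    if Z: "finite Z" and W: "finite W" and g: "g \<in> FIm Z W"
      and c: "c \<in> carrier (FMod (Shift (Mfree R X)) Z)" for Z W g c
  proof -
    interpret VW: module R "FMod V W" by (rule FI_mod[OF V W])
    interpret VZ: module R "FMod V Z" by (rule FI_mod[OF V Z])
    let ?H = "FIm X (sig Z)" and ?K = "FIm X (sig W)" and ?p = "compose X (sigf Z g)"
    have H: "finite ?H" using finite_FIm[OF X finite_sig[OF Z]] .
    have K: "finite ?K" using finite_FIm[OF X finite_sig[OF W]] .
    have p: "?p \<in> ?H \<rightarrow> ?K" using FIm_compose[OF _ sigf_FIm[OF g]] by blast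
    have cR: "c \<in> ?H \<rightarrow> carrier R" using c by (auto simp: PiE_def)
    have cR': "\<And>h. h \<in> ?H \<Longrightarrow> c h \<in> carrier R" using cR by auto
    have valZ: "\<And>h. h \<in> ?H \<Longrightarrow> FAct V Z W g (val V X Z v w h) \<in> carrier (FMod V W)"
      using valc[OF Z] FI_closed[OF V Z W g] by blast
    have gc: "FAct (Shift (Mfree R X)) Z W g c \<in> carrier (free_mod R ?K)"
      using cR by (auto intro!: R.finsum_closed simp: Pi_def)
    have hom_g: "FAct V Z W g \<in> module_hom R (FMod V Z) (FMod V W)" by (rule FI_hom[OF V Z W g])
    have "bld R V X vw W (FAct (Shift (Mfree R X)) Z W g c)
        = (\<Oplus>\<^bsub>FMod V W\<^esub>k\<in>?K. (\<Oplus>\<^bsub>R\<^esub>h\<in>{h\<in>?H. ?p h = k}. c h) \<odot>\<^bsub>FMod V W\<^esub> val V X W v w k)"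
      using W gc valc[OF W] by (simp add: bld_apply vw'(1) del: carrier_free_mod FAct_ShiftM)
        (intro VW.finsum_cong', auto)
    also have "\<dots> = (\<Oplus>\<^bsub>FMod V W\<^esub>h\<in>?H. c h \<odot>\<^bsub>FMod V W\<^esub> val V X W v w (?p h))"
      by (rule VW.reindex_sum[OF H K p cR]) (use valc[OF W] in auto)
    also have "\<dots> = (\<Oplus>\<^bsub>FMod V W\<^esub>h\<in>?H. c h \<odot>\<^bsub>FMod V W\<^esub> FAct V Z W g (val V X Z v w h))"
      by (intro VW.finsum_cong')
        (use cR' valc[OF W] valZ p val_nat[OF R V X Z W _ g vw'(2,3)] in auto)
    also have "\<dots> = (\<Oplus>\<^bsub>FMod V W\<^esub>h\<in>?H. FAct V Z W g (c h \<odot>\<^bsub>FMod V Z\<^esub> val V X Z v w h))"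
      by (intro VW.finsum_cong')
        (use cR' valc[OF Z] mh_smult[OF hom_g] mh_closed[OF hom_g] in auto)
    also have "\<dots> = FAct V Z W g (\<Oplus>\<^bsub>FMod V Z\<^esub>h\<in>?H. c h \<odot>\<^bsub>FMod V Z\<^esub> val V X Z v w h)"
      by (rule mh_finsum[OF hom_g FI_mod[OF V Z] FI_mod[OF V W] H, symmetric])
        (use cR valc[OF Z] in auto)
    also have "\<dots> = FAct V Z W g (bld R V X vw Z c)"
      using Z c by (simp add: bld_apply vw'(1) del: carrier_free_mod)
    finally show ?thesis .
  qed
  show ?thesis
    unfolding FIHomE_def FIHom_def
  proof (intro CollectI conjI allI impI ballI)
    fix Z :: "nat set" assume "finite Z"
    then show "bld R V X vw Z \<in> module_hom R (FMod (Shift (Mfree R X)) Z) (FMod V Z)" by (rule hom)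
  next
    fix Z W :: "nat set" and g c
    assume "finite Z" "finite W" "g \<in> FIm Z W" "c \<in> carrier (FMod (Shift (Mfree R X)) Z)"
    then show "bld R V X vw W (FAct (Shift (Mfree R X)) Z W g c) = FAct V Z W g (bld R V X vw Z c)"
      by (rule nat)
  next
    show "bld R V X vw \<in> extensional {X. finite X}" by (simp add: bld_def)
  next
    fix Z :: "nat set" assume "finite Z"
    then show "bld R V X vw Z \<in> extensional (carrier (FMod (Shift (Mfree R X)) Z))"
      by (simp add: bld_def del: carrier_free_mod)
  qed
qed

end


lemma FIHomE_hom: "\<phi> \<in> FIHomE R M V \<Longrightarrow> finite Z \<Longrightarrow> \<phi> Z \<in> module_hom R (FMod M Z) (FMod V Z)"
  by (simp add: FIHomE_def FIHom_def)
lemma FIHomE_nat: "\<phi> \<in> FIHomE R M V \<Longrightarrow> finite Z \<Longrightarrow> finite W \<Longrightarrow> g \<in> FIm Z W \<Longrightarrow>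
   c \<in> carrier (FMod M Z) \<Longrightarrow> \<phi> W (FAct M Z W g c) = FAct V Z W g (\<phi> Z c)"
  by (simp add: FIHomE_def FIHom_def)
lemma FIHomE_ext1: "\<phi> \<in> FIHomE R M V \<Longrightarrow> \<not> finite Z \<Longrightarrow> \<phi> Z = undefined"
  by (auto simp: FIHomE_def extensional_def)
lemma FIHomE_ext2: "\<phi> \<in> FIHomE R M V \<Longrightarrow> finite Z \<Longrightarrow> c \<notin> carrier (FMod M Z) \<Longrightarrow> \<phi> Z c = undefined"
  by (auto simp: FIHomE_def extensional_def)

lemma dlt_carrier_Shift: "cring R \<Longrightarrow> dlt R (FIm X (sig Z)) h \<in> carrier (FMod (Shift (Mfree R X)) Z)"
  using dlt_carrier[of R "FIm X (sig Z)" h] by (simp only: FMod_ShiftM)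

context
  fixes R :: "('k,'m) ring_scheme" and V :: "('k,'v) fimod"
  assumes R: "cring R" and V: "is_FI_module R V"
begin

lemma eta_closed:
  assumes X: "finite X" and \<phi>: "\<phi> \<in> carrier (Qmod R V X)"
  shows "eta R X \<phi> \<in> carrier (Q'mod V X)"
proof -
  have \<phi>': "\<phi> \<in> FIHomE R (Shift (Mfree R X)) V" using \<phi> by (simp add: carrier_Qmod)
  have 1: "\<phi> X (dlt R (FIm X (sig X)) (sgm X)) \<in> carrier (FMod V X)"
    by (rule mh_closed[OF FIHomE_hom[OF \<phi>' X] dlt_carrier_Shift[OF R]])
  have 2: "\<phi> (X - {x}) (dlt R (FIm X (sig (X - {x}))) (tau X x)) \<in> carrier (FMod V (X - {x}))" for x
    by (rule mh_closed[OF FIHomE_hom[OF \<phi>'] dlt_carrier_Shift[OF R]]) (use X in simp)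
  show ?thesis using 1 2 by (simp add: eta_def carrier_Q'mod)
qed

lemma bld_dlt:
  assumes X: "finite X" and Z: "finite Z" and vw: "vw \<in> carrier (Q'mod V X)"
    and h0: "h0 \<in> FIm X (sig Z)"
  shows "bld R V X vw Z (dlt R (FIm X (sig Z)) h0) = val V X Z (fst vw) (snd vw) h0"
proof -
  interpret VZ: module R "FMod V Z" by (rule FI_mod[OF V Z])
  have valc: "\<And>h. h \<in> FIm X (sig Z) \<Longrightarrow> val V X Z (fst vw) (snd vw) h \<in> carrier (FMod V Z)"
    using val_closed[OF R V X Z] vw by (auto simp: carrier_Q'mod)
  have "bld R V X vw Z (dlt R (FIm X (sig Z)) h0)
    = (\<Oplus>\<^bsub>FMod V Z\<^esub>h\<in>FIm X (sig Z). (if h = h0 then \<one>\<^bsub>R\<^esub> else \<zero>\<^bsub>R\<^esub>) \<odot>\<^bsub>FMod V Z\<^esub> val V X Z (fst vw) (snd vw) h)"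
    unfolding bld_apply[OF R V Z dlt_carrier[OF R]]
    using valc by (intro VZ.finsum_cong') (auto simp: dlt_def)
  also have "\<dots> = val V X Z (fst vw) (snd vw) h0"
    by (rule VZ.delta_sum[OF finite_FIm[OF X finite_sig[OF Z]] h0]) (use valc in auto)
  finally show ?thesis .
qed

lemma eta_bld:
  assumes X: "finite X" and vw: "vw \<in> carrier (Q'mod V X)"
  shows "eta R X (bld R V X vw) = vw"
proof -
  obtain v w where vw': "vw = (v, w)" "v \<in> carrier (FMod V X)"
    "w \<in> (\<Pi>\<^sub>E x\<in>X. carrier (FMod V (X - {x})))"
    using vw by (auto simp: carrier_Q'mod)
  have "(\<lambda>x\<in>X. sgm X x - 1) = restrict id X" by (auto simp: sgm_def intro!: ext)
  have 1: "bld R V X vw X (dlt R (FIm X (sig X)) (sgm X)) = v"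
  proof -
    have n0: "0 \<notin> sgm X ` X" by (auto simp: sgm_def)
    have e: "(\<lambda>x\<in>X. sgm X x - 1) = restrict id X" by (auto simp: sgm_def intro!: ext)
    show ?thesis
      using bld_dlt[OF X X vw sgm_FIm] vw'(1)
      by (simp only: val1[OF n0] e FI_id[OF V X vw'(2)] fst_conv snd_conv)
  qed
  have 2: "bld R V X vw (X - {x}) (dlt R (FIm X (sig (X - {x}))) (tau X x)) = w x" if x: "x \<in> X" for x
  proof -
    have t0: "tau X x x = 0" using x by (simp add: tau_def)
    have e: "(\<lambda>x'\<in>X - {x}. tau X x x' - 1) = restrict id (X - {x})" by (auto simp: tau_def intro!: ext)
    have wx: "w x \<in> carrier (FMod V (X - {x}))" using vw'(3) x by auto
    have X': "finite (X - {x})" using X by simp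
    show ?thesis
      using bld_dlt[OF X X' vw tau_FIm] vw'(1)
      by (simp only: val2[OF tau_FIm x t0] e FI_id[OF V X' wx] fst_conv snd_conv)
  qed
  have 3: "(\<lambda>x\<in>X. bld R V X vw (X - {x}) (dlt R (FIm X (sig (X - {x}))) (tau X x))) = w"
    using 2 vw'(3) by (auto simp: PiE_def extensional_def intro!: ext)
  show ?thesis using 1 3 vw'(1) by (simp add: eta_def)
qed

lemma phi_dlt:
  assumes X: "finite X" and Z: "finite Z" and \<phi>: "\<phi> \<in> FIHomE R (Shift (Mfree R X)) V"
    and h: "h \<in> FIm X (sig Z)"
  shows "\<phi> Z (dlt R (FIm X (sig Z)) h) = val V X Z (fst (eta R X \<phi>)) (snd (eta R X \<phi>)) h"
proof (cases "0 \<in> h ` X")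
  case True
  then obtain x0 where x0: "x0 \<in> X" "h x0 = 0" by auto
  let ?hb = "\<lambda>x\<in>X - {x0}. h x - 1"
  have hb: "?hb \<in> FIm (X - {x0}) Z" by (rule lower_FIm[OF h _ nz_rest[OF h x0]]) auto
  have "\<phi> Z (dlt R (FIm X (sig Z)) h)
      = \<phi> Z (FAct (Shift (Mfree R X)) (X - {x0}) Z ?hb (dlt R (FIm X (sig (X - {x0}))) (tau X x0)))"
    using push_dlt[OF R X _ hb tau_FIm] lower_tau[OF h x0] X by simp
  also have "\<dots> = FAct V (X - {x0}) Z ?hb (\<phi> (X - {x0}) (dlt R (FIm X (sig (X - {x0}))) (tau X x0)))"
    by (rule FIHomE_nat[OF \<phi> _ Z hb dlt_carrier_Shift[OF R]]) (use X in simp)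
  also have "\<dots> = val V X Z (fst (eta R X \<phi>)) (snd (eta R X \<phi>)) h"
    using val2[OF h x0, of V "fst (eta R X \<phi>)" "snd (eta R X \<phi>)"] x0 by (simp add: eta_def)
  finally show ?thesis .
next
  case False
  let ?hb = "\<lambda>x\<in>X. h x - 1"
  have hb: "?hb \<in> FIm X Z" by (rule lower_FIm[OF h order_refl]) (use False in force)
  have "\<phi> Z (dlt R (FIm X (sig Z)) h)
      = \<phi> Z (FAct (Shift (Mfree R X)) X Z ?hb (dlt R (FIm X (sig X)) (sgm X)))"
    using push_dlt[OF R X X hb sgm_FIm] lower_sgm[OF h False] by simp
  also have "\<dots> = FAct V X Z ?hb (\<phi> X (dlt R (FIm X (sig X)) (sgm X)))"
    by (rule FIHomE_nat[OF \<phi> X Z hb dlt_carrier_Shift[OF R]])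
  also have "\<dots> = val V X Z (fst (eta R X \<phi>)) (snd (eta R X \<phi>)) h"
    using val1[OF False, of V Z "fst (eta R X \<phi>)" "snd (eta R X \<phi>)"] by (simp add: eta_def)
  finally show ?thesis .
qed

lemma bld_eta:
  assumes X: "finite X" and \<phi>: "\<phi> \<in> carrier (Qmod R V X)"
  shows "bld R V X (eta R X \<phi>) = \<phi>"
proof -
  have \<phi>': "\<phi> \<in> FIHomE R (Shift (Mfree R X)) V" using \<phi> by (simp add: carrier_Qmod)
  have ec: "eta R X \<phi> \<in> carrier (Q'mod V X)" by (rule eta_closed[OF X \<phi>])
  show ?thesis
  proof (rule ext)
    fix Z show "bld R V X (eta R X \<phi>) Z = \<phi> Z"
    proof (cases "finite Z")
      case False
      then show ?thesis using FIHomE_ext1[OF \<phi>'] by (simp add: bld_def)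
    next
      case Z: True
      interpret VZ: module R "FMod V Z" by (rule FI_mod[OF V Z])
      have H: "finite (FIm X (sig Z))" by (rule finite_FIm[OF X finite_sig[OF Z]])
      show ?thesis
      proof (rule ext)
        fix c show "bld R V X (eta R X \<phi>) Z c = \<phi> Z c"
        proof (cases "c \<in> carrier (free_mod R (FIm X (sig Z)))")
          case False
          then show ?thesis using FIHomE_ext2[OF \<phi>' Z] Z by (simp add: bld_def del: carrier_free_mod)
        next
          case c: True
          have cR: "\<And>h. h \<in> FIm X (sig Z) \<Longrightarrow> c h \<in> carrier R" using c by (auto simp: PiE_def)
          have valc: "\<And>h. h \<in> FIm X (sig Z) \<Longrightarrow>
              val V X Z (fst (eta R X \<phi>)) (snd (eta R X \<phi>)) h \<in> carrier (FMod V Z)"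
            using val_closed[OF R V X Z] ec by (auto simp: carrier_Q'mod)
          have "\<phi> Z c = (\<Oplus>\<^bsub>FMod V Z\<^esub>h\<in>FIm X (sig Z). c h \<odot>\<^bsub>FMod V Z\<^esub> \<phi> Z (dlt R (FIm X (sig Z)) h))"
            using lin_free[OF R H FI_mod[OF V Z] _ c] FIHomE_hom[OF \<phi>' Z] by simp
          also have "\<dots> = (\<Oplus>\<^bsub>FMod V Z\<^esub>h\<in>FIm X (sig Z). c h \<odot>\<^bsub>FMod V Z\<^esub>
                    val V X Z (fst (eta R X \<phi>)) (snd (eta R X \<phi>)) h)"
            using cR valc phi_dlt[OF X Z \<phi>'] by (intro VZ.finsum_cong') auto
          also have "\<dots> = bld R V X (eta R X \<phi>) Z c"
            using c Z by (simp add: bld_apply[OF R V] del: carrier_free_mod)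
          finally show ?thesis by simp
        qed
      qed
    qed
  qed
qed

end


lemma shiftM_closed:
  assumes R: "cring R" and c: "c \<in> carrier (FMod (Shift (Mfree R X)) Z)"
  shows "FAct (Shift (Mfree R X)) Z W g c \<in> carrier (FMod (Shift (Mfree R X)) W)"
proof -
  interpret cring R by fact
  have "c \<in> FIm X (sig Z) \<rightarrow> carrier R" using c by (auto simp: PiE_def)
  then show ?thesis by (auto intro!: finsum_closed simp: Pi_def)
qed

lemma Qmod_eq: "Qmod R V X = (PiM {Z. finite Z} (\<lambda>Z. PiM (carrier (FMod (Shift (Mfree R X)) Z)) (\<lambda>c. FMod V Z)))
    \<lparr>carrier := FIHomE R (Shift (Mfree R X)) V\<rparr>"
  by (simp add: Qmod_def PiM_def mk_module_def del: carrier_free_mod FMod_ShiftM)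

context
  fixes R :: "('k,'m) ring_scheme" and V :: "('k,'v) fimod"
  assumes R: "cring R" and V: "is_FI_module R V"
begin

lemma Q'mod_module: "finite X \<Longrightarrow> module R (Q'mod V X)"
  unfolding Q'mod_Prod
  by (intro ProdM_module[OF R] FI_mod[OF V] PiM_module[OF R]) auto

lemma Qmod_module:
  assumes X: "finite X"
  shows "module R (Qmod R V X)"
proof -
  interpret R: cring R by (rule R)
  let ?C = "\<lambda>Z. carrier (FMod (Shift (Mfree R X)) Z)"
  let ?P = "PiM {Z. finite Z} (\<lambda>Z. PiM (?C Z) (\<lambda>c. FMod V Z))"
  let ?S = "FIHomE R (Shift (Mfree R X)) V"
  have P: "module R ?P"
    by (intro PiM_module[OF R] FI_mod[OF V]) auto
  have carrP: "carrier ?P = (\<Pi>\<^sub>E Z\<in>{Z. finite Z}. \<Pi>\<^sub>E c\<in>?C Z. carrier (FMod V Z))"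
    by (simp add: PiM_def del: carrier_free_mod FMod_ShiftM)
  have opsP: "zero ?P = (\<lambda>Z\<in>{Z. finite Z}. \<lambda>c\<in>?C Z. \<zero>\<^bsub>FMod V Z\<^esub>)"
    "\<And>\<phi> \<psi>. add ?P \<phi> \<psi> = (\<lambda>Z\<in>{Z. finite Z}. \<lambda>c\<in>?C Z. \<phi> Z c \<oplus>\<^bsub>FMod V Z\<^esub> \<psi> Z c)"
    "\<And>a \<phi>. smult ?P a \<phi> = (\<lambda>Z\<in>{Z. finite Z}. \<lambda>c\<in>?C Z. a \<odot>\<^bsub>FMod V Z\<^esub> \<phi> Z c)"
    by (simp_all add: PiM_def del: carrier_free_mod FMod_ShiftM)
  have mem: "\<alpha> \<in> ?S" if
    hom: "\<And>Z. finite Z \<Longrightarrow> \<alpha> Z \<in> module_hom R (FMod (Shift (Mfree R X)) Z) (FMod V Z)"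
    and nat: "\<And>Z W g c. finite Z \<Longrightarrow> finite W \<Longrightarrow> g \<in> FIm Z W \<Longrightarrow> c \<in> ?C Z \<Longrightarrow>
       \<alpha> W (FAct (Shift (Mfree R X)) Z W g c) = FAct V Z W g (\<alpha> Z c)"
    and e1: "\<alpha> \<in> extensional {Z. finite Z}"
    and e2: "\<And>Z. finite Z \<Longrightarrow> \<alpha> Z \<in> extensional (?C Z)" for \<alpha>
    unfolding FIHomE_def FIHom_def using hom nat e1 e2 by blast
  show ?thesis unfolding Qmod_eq
  proof (rule submodule_mk[OF P])
    show "?S \<subseteq> carrier ?P"
    proof
      fix \<phi> assume \<phi>: "\<phi> \<in> ?S"
      show "\<phi> \<in> carrier ?P" unfolding carrP
        using FIHomE_ext1[OF \<phi>] FIHomE_ext2[OF \<phi>] mh_closed[OF FIHomE_hom[OF \<phi>]]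
        by (auto simp: PiE_def extensional_def simp del: carrier_free_mod FMod_ShiftM)
    qed
  next
    show "\<zero>\<^bsub>?P\<^esub> \<in> ?S" unfolding opsP(1)
    proof (rule mem)
      fix Z :: "nat set" assume Z: "finite Z"
      interpret VZ: module R "FMod V Z" by (rule FI_mod[OF V Z])
      interpret F: module R "FMod (Shift (Mfree R X)) Z" using free_mod_module[OF R] by simp
      show "(\<lambda>Z\<in>{Z. finite Z}. \<lambda>c\<in>?C Z. \<zero>\<^bsub>FMod V Z\<^esub>) Z \<in> module_hom R (FMod (Shift (Mfree R X)) Z) (FMod V Z)"
        using Z by (auto simp: module_hom_def simp del: carrier_free_mod FMod_ShiftM)
    next
      fix Z W :: "nat set" and g c assume Z: "finite Z" and W: "finite W" and g: "g \<in> FIm Z W" and c: "c \<in> ?C Z"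
      show "(\<lambda>Z\<in>{Z. finite Z}. \<lambda>c\<in>?C Z. \<zero>\<^bsub>FMod V Z\<^esub>) W (FAct (Shift (Mfree R X)) Z W g c) =
            FAct V Z W g ((\<lambda>Z\<in>{Z. finite Z}. \<lambda>c\<in>?C Z. \<zero>\<^bsub>FMod V Z\<^esub>) Z c)"
        using Z W c shiftM_closed[OF R c] mh_zero[OF FI_hom[OF V Z W g] FI_mod[OF V Z] FI_mod[OF V W]]
        by (simp del: carrier_free_mod FMod_ShiftM FAct_ShiftM)
    qed auto
  next
    fix \<phi> \<psi> assume \<phi>: "\<phi> \<in> ?S" and \<psi>: "\<psi> \<in> ?S"
    show "\<phi> \<oplus>\<^bsub>?P\<^esub> \<psi> \<in> ?S" unfolding opsP(2)
    proof (rule mem)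
      fix Z :: "nat set" assume Z: "finite Z"
      interpret VZ: module R "FMod V Z" by (rule FI_mod[OF V Z])
      interpret F: module R "FMod (Shift (Mfree R X)) Z" using free_mod_module[OF R] by simp
      note h1 = FIHomE_hom[OF \<phi> Z] and h2 = FIHomE_hom[OF \<psi> Z]
      show "(\<lambda>Z\<in>{Z. finite Z}. \<lambda>c\<in>?C Z. \<phi> Z c \<oplus>\<^bsub>FMod V Z\<^esub> \<psi> Z c) Z \<in> module_hom R (FMod (Shift (Mfree R X)) Z) (FMod V Z)"
        unfolding module_hom_def
      proof (intro CollectI conjI ballI Pi_I)
        fix c assume c: "c \<in> ?C Z"
        then show "(\<lambda>Z\<in>{Z. finite Z}. \<lambda>c\<in>?C Z. \<phi> Z c \<oplus>\<^bsub>FMod V Z\<^esub> \<psi> Z c) Z c \<in> carrier (FMod V Z)"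
          using Z mh_closed[OF h1 c] mh_closed[OF h2 c] by (simp del: carrier_free_mod FMod_ShiftM)
      next
        fix c d assume c: "c \<in> ?C Z" and d: "d \<in> ?C Z"
        show "(\<lambda>Z\<in>{Z. finite Z}. \<lambda>c\<in>?C Z. \<phi> Z c \<oplus>\<^bsub>FMod V Z\<^esub> \<psi> Z c) Z (c \<oplus>\<^bsub>FMod (Shift (Mfree R X)) Z\<^esub> d) =
          (\<lambda>Z\<in>{Z. finite Z}. \<lambda>c\<in>?C Z. \<phi> Z c \<oplus>\<^bsub>FMod V Z\<^esub> \<psi> Z c) Z c \<oplus>\<^bsub>FMod V Z\<^esub>
          (\<lambda>Z\<in>{Z. finite Z}. \<lambda>c\<in>?C Z. \<phi> Z c \<oplus>\<^bsub>FMod V Z\<^esub> \<psi> Z c) Z d"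
          using Z c d F.a_closed[OF c d] mh_add[OF h1 c d] mh_add[OF h2 c d]
            mh_closed[OF h1 c] mh_closed[OF h2 c] mh_closed[OF h1 d] mh_closed[OF h2 d]
          by (simp add: VZ.a_ac del: carrier_free_mod FMod_ShiftM)
      next
        fix a c assume a: "a \<in> carrier R" and c: "c \<in> ?C Z"
        show "(\<lambda>Z\<in>{Z. finite Z}. \<lambda>c\<in>?C Z. \<phi> Z c \<oplus>\<^bsub>FMod V Z\<^esub> \<psi> Z c) Z (a \<odot>\<^bsub>FMod (Shift (Mfree R X)) Z\<^esub> c) =
          a \<odot>\<^bsub>FMod V Z\<^esub> (\<lambda>Z\<in>{Z. finite Z}. \<lambda>c\<in>?C Z. \<phi> Z c \<oplus>\<^bsub>FMod V Z\<^esub> \<psi> Z c) Z c"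
          using Z a c F.smult_closed[OF a c] mh_smult[OF h1 a c] mh_smult[OF h2 a c]
            mh_closed[OF h1 c] mh_closed[OF h2 c]
          by (simp add: VZ.smult_r_distr del: carrier_free_mod FMod_ShiftM)
      qed
    next
      fix Z W :: "nat set" and g c assume Z: "finite Z" and W: "finite W" and g: "g \<in> FIm Z W" and c: "c \<in> ?C Z"
      show "(\<lambda>Z\<in>{Z. finite Z}. \<lambda>c\<in>?C Z. \<phi> Z c \<oplus>\<^bsub>FMod V Z\<^esub> \<psi> Z c) W (FAct (Shift (Mfree R X)) Z W g c) =
            FAct V Z W g ((\<lambda>Z\<in>{Z. finite Z}. \<lambda>c\<in>?C Z. \<phi> Z c \<oplus>\<^bsub>FMod V Z\<^esub> \<psi> Z c) Z c)"
        using Z W c shiftM_closed[OF R c] FIHomE_nat[OF \<phi> Z W g c] FIHomE_nat[OF \<psi> Z W g c]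
          mh_add[OF FI_hom[OF V Z W g] mh_closed[OF FIHomE_hom[OF \<phi> Z] c] mh_closed[OF FIHomE_hom[OF \<psi> Z] c]]
        by (simp del: carrier_free_mod FMod_ShiftM FAct_ShiftM)
    qed auto
  next
    fix a \<phi> assume a: "a \<in> carrier R" and \<phi>: "\<phi> \<in> ?S"
    show "a \<odot>\<^bsub>?P\<^esub> \<phi> \<in> ?S" unfolding opsP(3)
    proof (rule mem)
      fix Z :: "nat set" assume Z: "finite Z"
      interpret VZ: module R "FMod V Z" by (rule FI_mod[OF V Z])
      interpret F: module R "FMod (Shift (Mfree R X)) Z" using free_mod_module[OF R] by simp
      note h1 = FIHomE_hom[OF \<phi> Z]
      show "(\<lambda>Z\<in>{Z. finite Z}. \<lambda>c\<in>?C Z. a \<odot>\<^bsub>FMod V Z\<^esub> \<phi> Z c) Z \<in> module_hom R (FMod (Shift (Mfree R X)) Z) (FMod V Z)"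
        unfolding module_hom_def
      proof (intro CollectI conjI ballI Pi_I)
        fix c assume c: "c \<in> ?C Z"
        then show "(\<lambda>Z\<in>{Z. finite Z}. \<lambda>c\<in>?C Z. a \<odot>\<^bsub>FMod V Z\<^esub> \<phi> Z c) Z c \<in> carrier (FMod V Z)"
          using Z a mh_closed[OF h1 c] by (simp del: carrier_free_mod FMod_ShiftM)
      next
        fix c d assume c: "c \<in> ?C Z" and d: "d \<in> ?C Z"
        show "(\<lambda>Z\<in>{Z. finite Z}. \<lambda>c\<in>?C Z. a \<odot>\<^bsub>FMod V Z\<^esub> \<phi> Z c) Z (c \<oplus>\<^bsub>FMod (Shift (Mfree R X)) Z\<^esub> d) =
          (\<lambda>Z\<in>{Z. finite Z}. \<lambda>c\<in>?C Z. a \<odot>\<^bsub>FMod V Z\<^esub> \<phi> Z c) Z c \<oplus>\<^bsub>FMod V Z\<^esub>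
          (\<lambda>Z\<in>{Z. finite Z}. \<lambda>c\<in>?C Z. a \<odot>\<^bsub>FMod V Z\<^esub> \<phi> Z c) Z d"
          using Z a c d F.a_closed[OF c d] mh_add[OF h1 c d] mh_closed[OF h1 c] mh_closed[OF h1 d]
          by (simp add: VZ.smult_r_distr del: carrier_free_mod FMod_ShiftM)
      next
        fix b c assume b: "b \<in> carrier R" and c: "c \<in> ?C Z"
        have "a \<odot>\<^bsub>FMod V Z\<^esub> (b \<odot>\<^bsub>FMod V Z\<^esub> \<phi> Z c) = b \<odot>\<^bsub>FMod V Z\<^esub> (a \<odot>\<^bsub>FMod V Z\<^esub> \<phi> Z c)"
          using a b mh_closed[OF h1 c] by (simp add: VZ.smult_assoc1[symmetric] R.m_comm)
        then show "(\<lambda>Z\<in>{Z. finite Z}. \<lambda>c\<in>?C Z. a \<odot>\<^bsub>FMod V Z\<^esub> \<phi> Z c) Z (b \<odot>\<^bsub>FMod (Shift (Mfree R X)) Z\<^esub> c) =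
          b \<odot>\<^bsub>FMod V Z\<^esub> (\<lambda>Z\<in>{Z. finite Z}. \<lambda>c\<in>?C Z. a \<odot>\<^bsub>FMod V Z\<^esub> \<phi> Z c) Z c"
          using Z b c F.smult_closed[OF b c] mh_smult[OF h1 b c]
          by (simp del: carrier_free_mod FMod_ShiftM)
      qed
    next
      fix Z W :: "nat set" and g c assume Z: "finite Z" and W: "finite W" and g: "g \<in> FIm Z W" and c: "c \<in> ?C Z"
      show "(\<lambda>Z\<in>{Z. finite Z}. \<lambda>c\<in>?C Z. a \<odot>\<^bsub>FMod V Z\<^esub> \<phi> Z c) W (FAct (Shift (Mfree R X)) Z W g c) =
            FAct V Z W g ((\<lambda>Z\<in>{Z. finite Z}. \<lambda>c\<in>?C Z. a \<odot>\<^bsub>FMod V Z\<^esub> \<phi> Z c) Z c)"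
        using Z W c shiftM_closed[OF R c] FIHomE_nat[OF \<phi> Z W g c]
          mh_smult[OF FI_hom[OF V Z W g] a mh_closed[OF FIHomE_hom[OF \<phi> Z] c]]
        by (simp del: carrier_free_mod FMod_ShiftM FAct_ShiftM)
    qed auto
  qed
qed

end


lemma FIm_Pi: "f \<in> FIm X Y \<Longrightarrow> f \<in> X \<rightarrow> Y"
  by (auto simp: FIm_def PiE_def)

context
  fixes R :: "('k,'m) ring_scheme" (structure)
  assumes R: "cring R"
begin

lemma rho_closed:
  assumes c: "c \<in> carrier (free_mod R (FIm Y Z'))"
  shows "rho R X Y f Z' c \<in> carrier (free_mod R (FIm X Z'))"
proof -
  interpret cring R by (rule R)
  have "c \<in> FIm Y Z' \<rightarrow> carrier R" using c by (auto simp: PiE_def)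
  then show ?thesis by (auto simp: rho_def Pi_def intro!: finsum_closed)
qed

lemma rho_hom:
  assumes Y: "finite Y" and Z: "finite Z'"
  shows "rho R X Y f Z' \<in> module_hom R (free_mod R (FIm Y Z')) (free_mod R (FIm X Z'))"
proof -
  interpret cring R by (rule R)
  have fin: "finite {g \<in> FIm Y Z'. P g}" for P using finite_FIm[OF Y Z] by simp
  show ?thesis unfolding module_hom_def
  proof (intro CollectI conjI ballI Pi_I)
    fix c assume "c \<in> carrier (free_mod R (FIm Y Z'))"
    then show "rho R X Y f Z' c \<in> carrier (free_mod R (FIm X Z'))" by (rule rho_closed)
  next
    fix c d assume c: "c \<in> carrier (free_mod R (FIm Y Z'))" and d: "d \<in> carrier (free_mod R (FIm Y Z'))"
    have cR: "c \<in> {g \<in> FIm Y Z'. P g} \<rightarrow> carrier R" "d \<in> {g \<in> FIm Y Z'. P g} \<rightarrow> carrier R" for P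
      using c d by (auto simp: PiE_def)
    show "rho R X Y f Z' (c \<oplus>\<^bsub>free_mod R (FIm Y Z')\<^esub> d) =
      rho R X Y f Z' c \<oplus>\<^bsub>free_mod R (FIm X Z')\<^esub> rho R X Y f Z' d"
    proof (rule ext)
      fix h
      have "(\<Oplus>g\<in>{g \<in> FIm Y Z'. compose X g f = h}. (\<lambda>i\<in>FIm Y Z'. c i \<oplus> d i) g)
          = (\<Oplus>g\<in>{g \<in> FIm Y Z'. compose X g f = h}. c g \<oplus> d g)"
        using cR by (intro finsum_cong') (auto simp: Pi_def)
      also have "\<dots> = (\<Oplus>g\<in>{g \<in> FIm Y Z'. compose X g f = h}. c g) \<oplus> (\<Oplus>g\<in>{g \<in> FIm Y Z'. compose X g f = h}. d g)"
        using cR by (intro finsum_addf)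
      finally show "rho R X Y f Z' (c \<oplus>\<^bsub>free_mod R (FIm Y Z')\<^esub> d) h =
        (rho R X Y f Z' c \<oplus>\<^bsub>free_mod R (FIm X Z')\<^esub> rho R X Y f Z' d) h"
        by (simp add: rho_def free_mod_ops)
    qed
  next
    fix a c assume a: "a \<in> carrier R" and c: "c \<in> carrier (free_mod R (FIm Y Z'))"
    have cR: "c \<in> {g \<in> FIm Y Z'. P g} \<rightarrow> carrier R" for P
      using c by (auto simp: PiE_def)
    show "rho R X Y f Z' (a \<odot>\<^bsub>free_mod R (FIm Y Z')\<^esub> c) = a \<odot>\<^bsub>free_mod R (FIm X Z')\<^esub> rho R X Y f Z' c"
    proof (rule ext)
      fix h
      have "(\<Oplus>g\<in>{g \<in> FIm Y Z'. compose X g f = h}. (\<lambda>i\<in>FIm Y Z'. a \<otimes> c i) g)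
          = (\<Oplus>g\<in>{g \<in> FIm Y Z'. compose X g f = h}. a \<otimes> c g)"
        using cR a by (intro finsum_cong') (auto simp: Pi_def)
      also have "\<dots> = a \<otimes> (\<Oplus>g\<in>{g \<in> FIm Y Z'. compose X g f = h}. c g)"
        using cR a fin by (intro finsum_rdistr[symmetric]) auto
      finally show "rho R X Y f Z' (a \<odot>\<^bsub>free_mod R (FIm Y Z')\<^esub> c) h =
        (a \<odot>\<^bsub>free_mod R (FIm X Z')\<^esub> rho R X Y f Z' c) h"
        by (simp add: rho_def free_mod_ops)
    qed
  qed
qed

lemma rho_nat:
  assumes X: "finite X" and Y: "finite Y" and Z: "finite Z" and W: "finite W"
    and f: "f \<in> FIm X Y" and g: "g \<in> FIm Z W"
    and c: "c \<in> carrier (free_mod R (FIm Y (sig Z)))"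
  shows "rho R X Y f (sig W) (FAct (Shift (Mfree R Y)) Z W g c)
       = FAct (Shift (Mfree R X)) Z W g (rho R X Y f (sig Z) c)"
proof (rule ext)
  interpret cring R by (rule R)
  fix h
  let ?G = "sigf Z g"
  let ?A = "FIm Y (sig Z)"
  have A: "finite ?A" using finite_FIm[OF Y finite_sig[OF Z]] .
  have cR: "c \<in> ?A \<rightarrow> carrier R" using c by (auto simp: PiE_def)
  have cR': "c \<in> {k \<in> ?A. P k} \<rightarrow> carrier R" for P using cR by auto
  have G: "?G \<in> FIm (sig Z) (sig W)" by (rule sigf_FIm[OF g])
  show "rho R X Y f (sig W) (FAct (Shift (Mfree R Y)) Z W g c) h
       = FAct (Shift (Mfree R X)) Z W g (rho R X Y f (sig Z) c) h"
  proof (cases "h \<in> FIm X (sig W)")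
    case False
    then show ?thesis by (simp add: rho_def)
  next
    case True
    have "rho R X Y f (sig W) (FAct (Shift (Mfree R Y)) Z W g c) h
       = (\<Oplus>k\<in>{k \<in> FIm Y (sig W). compose X k f = h}. \<Oplus>k'\<in>{k' \<in> ?A. compose Y ?G k' = k}. c k')"
      using True cR' by (simp add: rho_def) (intro finsum_cong', auto intro!: finsum_closed)
    also have "\<dots> = (\<Oplus>k'\<in>{k' \<in> ?A. compose Y ?G k' \<in> {k \<in> FIm Y (sig W). compose X k f = h}}. c k')"
      by (rule fiber_sum[OF A cR]) (use finite_FIm[OF Y finite_sig[OF W]] in simp)
    also have "\<dots> = (\<Oplus>k'\<in>{k' \<in> ?A. compose X k' f \<in> {h' \<in> FIm X (sig Z). compose X ?G h' = h}}. c k')"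
    proof -
      have "{k' \<in> ?A. compose Y ?G k' \<in> {k \<in> FIm Y (sig W). compose X k f = h}}
          = {k' \<in> ?A. compose X k' f \<in> {h' \<in> FIm X (sig Z). compose X ?G h' = h}}"
        using FIm_compose[OF _ G] FIm_compose[OF f]
        by (auto simp: compose_assoc[OF FIm_Pi[OF f], symmetric])
      then show ?thesis by simp
    qed
    also have "\<dots> = (\<Oplus>h'\<in>{h' \<in> FIm X (sig Z). compose X ?G h' = h}. \<Oplus>k'\<in>{k' \<in> ?A. compose X k' f = h'}. c k')"
      by (rule fiber_sum[OF A cR, symmetric]) (use finite_FIm[OF X finite_sig[OF Z]] in simp)
    also have "\<dots> = FAct (Shift (Mfree R X)) Z W g (rho R X Y f (sig Z) c) h"
      using True cR' by (simp add: rho_def) (intro finsum_cong', auto intro!: finsum_closed)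
    finally show ?thesis .
  qed
qed

end


lemma FAct_Q: "FAct (Q R V) X Y f \<phi> = (\<lambda>Z\<in>{Z. finite Z}. \<lambda>c\<in>carrier (FMod (Shift (Mfree R Y)) Z).
        \<phi> Z (rho R X Y f (sig Z) c))"
  by (simp add: Q_def del: carrier_free_mod FMod_ShiftM)
lemma FMod_Q: "FMod (Q R V) X = Qmod R V X"
  by (simp add: Q_def)
lemma Qmod_ops:
  "add (Qmod R V X) = (\<lambda>\<phi> \<psi>. \<lambda>Z\<in>{Z. finite Z}. \<lambda>c\<in>carrier (FMod (Shift (Mfree R X)) Z).
          \<phi> Z c \<oplus>\<^bsub>FMod V Z\<^esub> \<psi> Z c)"
  "smult (Qmod R V X) = (\<lambda>a \<phi>. \<lambda>Z\<in>{Z. finite Z}. \<lambda>c\<in>carrier (FMod (Shift (Mfree R X)) Z).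
          a \<odot>\<^bsub>FMod V Z\<^esub> \<phi> Z c)"
  by (simp_all add: Qmod_def del: carrier_free_mod FMod_ShiftM)

context
  fixes R :: "('k,'m) ring_scheme" and V :: "('k,'v) fimod"
  assumes R: "cring R" and V: "is_FI_module R V"
begin

lemma Q_act_closed:
  assumes X: "finite X" and Y: "finite Y" and f: "f \<in> FIm X Y" and \<phi>: "\<phi> \<in> carrier (Qmod R V X)"
  shows "FAct (Q R V) X Y f \<phi> \<in> carrier (Qmod R V Y)"
proof -
  have \<phi>': "\<phi> \<in> FIHomE R (Shift (Mfree R X)) V" using \<phi> by (simp add: carrier_Qmod)
  let ?C = "\<lambda>Z. carrier (FMod (Shift (Mfree R Y)) Z)"
  let ?F = "FAct (Q R V) X Y f \<phi>"
  have rc: "\<And>Z c. c \<in> ?C Z \<Longrightarrow> rho R X Y f (sig Z) c \<in> carrier (FMod (Shift (Mfree R X)) Z)"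
    using rho_closed[OF R] by simp
  have hom: "?F Z \<in> module_hom R (FMod (Shift (Mfree R Y)) Z) (FMod V Z)" if Z: "finite Z" for Z
  proof -
    note h1 = FIHomE_hom[OF \<phi>' Z]
    note h2 = rho_hom[OF R Y finite_sig[OF Z], of X f]
    interpret F: module R "FMod (Shift (Mfree R Y)) Z" using free_mod_module[OF R] by simp
    show ?thesis unfolding module_hom_def
    proof (intro CollectI conjI ballI Pi_I)
      fix c assume c: "c \<in> ?C Z"
      then show "?F Z c \<in> carrier (FMod V Z)"
        using Z mh_closed[OF h1 rc[OF c]] by (simp add: FAct_Q del: carrier_free_mod FMod_ShiftM)
    next
      fix c d assume c: "c \<in> ?C Z" and d: "d \<in> ?C Z"
      have "rho R X Y f (sig Z) (c \<oplus>\<^bsub>FMod (Shift (Mfree R Y)) Z\<^esub> d)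
          = rho R X Y f (sig Z) c \<oplus>\<^bsub>FMod (Shift (Mfree R X)) Z\<^esub> rho R X Y f (sig Z) d"
        using mh_add[OF h2] c d by simp
      then show "?F Z (c \<oplus>\<^bsub>FMod (Shift (Mfree R Y)) Z\<^esub> d) = ?F Z c \<oplus>\<^bsub>FMod V Z\<^esub> ?F Z d"
        using Z c d F.a_closed[OF c d] mh_add[OF h1 rc[OF c] rc[OF d]]
        by (simp add: FAct_Q del: carrier_free_mod FMod_ShiftM)
    next
      fix a c assume a: "a \<in> carrier R" and c: "c \<in> ?C Z"
      have "rho R X Y f (sig Z) (a \<odot>\<^bsub>FMod (Shift (Mfree R Y)) Z\<^esub> c)
          = a \<odot>\<^bsub>FMod (Shift (Mfree R X)) Z\<^esub> rho R X Y f (sig Z) c"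
        using mh_smult[OF h2] a c by simp
      then show "?F Z (a \<odot>\<^bsub>FMod (Shift (Mfree R Y)) Z\<^esub> c) = a \<odot>\<^bsub>FMod V Z\<^esub> ?F Z c"
        using Z a c F.smult_closed[OF a c] mh_smult[OF h1 a rc[OF c]]
        by (simp add: FAct_Q del: carrier_free_mod FMod_ShiftM)
    qed
  qed
  have nat: "?F W (FAct (Shift (Mfree R Y)) Z W g c) = FAct V Z W g (?F Z c)"
    if Z: "finite Z" and W: "finite W" and g: "g \<in> FIm Z W" and c: "c \<in> ?C Z" for Z W g c
  proof -
    have "?F W (FAct (Shift (Mfree R Y)) Z W g c) = \<phi> W (rho R X Y f (sig W) (FAct (Shift (Mfree R Y)) Z W g c))"
      using W shiftM_closed[OF R c] by (simp add: FAct_Q del: carrier_free_mod FMod_ShiftM FAct_ShiftM)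
    also have "\<dots> = \<phi> W (FAct (Shift (Mfree R X)) Z W g (rho R X Y f (sig Z) c))"
      using rho_nat[OF R X Y Z W f g] c by simp
    also have "\<dots> = FAct V Z W g (\<phi> Z (rho R X Y f (sig Z) c))"
      by (rule FIHomE_nat[OF \<phi>' Z W g rc[OF c]])
    also have "\<dots> = FAct V Z W g (?F Z c)"
      using Z c by (simp add: FAct_Q del: carrier_free_mod FMod_ShiftM FAct_ShiftM)
    finally show ?thesis .
  qed
  show ?thesis unfolding carrier_Qmod FIHomE_def FIHom_def
  proof (intro CollectI conjI allI impI ballI)
    fix Z :: "nat set" assume "finite Z" then show "?F Z \<in> module_hom R (FMod (Shift (Mfree R Y)) Z) (FMod V Z)"
      by (rule hom)
  next
    fix Z W :: "nat set" and g c assume "finite Z" "finite W" "g \<in> FIm Z W" "c \<in> ?C Z"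
    then show "?F W (FAct (Shift (Mfree R Y)) Z W g c) = FAct V Z W g (?F Z c)" by (rule nat)
  next
    show "?F \<in> extensional {X. finite X}" by (simp add: FAct_Q)
  next
    fix Z :: "nat set" assume "finite Z"
    then show "?F Z \<in> extensional (?C Z)" by (simp add: FAct_Q del: carrier_free_mod FMod_ShiftM)
  qed
qed

lemma Q_act_hom:
  assumes X: "finite X" and Y: "finite Y" and f: "f \<in> FIm X Y"
  shows "FAct (Q R V) X Y f \<in> module_hom R (Qmod R V X) (Qmod R V Y)"
  unfolding module_hom_def
proof (intro CollectI conjI ballI Pi_I)
  fix \<phi> assume "\<phi> \<in> carrier (Qmod R V X)"
  then show "FAct (Q R V) X Y f \<phi> \<in> carrier (Qmod R V Y)" by (rule Q_act_closed[OF X Y f])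
next
  interpret M: module R "Qmod R V X" by (rule Qmod_module[OF R V X])
  fix \<phi> \<psi> assume \<phi>: "\<phi> \<in> carrier (Qmod R V X)" and \<psi>: "\<psi> \<in> carrier (Qmod R V X)"
  have rc: "\<And>Z c. c \<in> carrier (FMod (Shift (Mfree R Y)) Z) \<Longrightarrow> rho R X Y f (sig Z) c \<in> carrier (FMod (Shift (Mfree R X)) Z)"
    using rho_closed[OF R] by simp
  show "FAct (Q R V) X Y f (\<phi> \<oplus>\<^bsub>Qmod R V X\<^esub> \<psi>) = FAct (Q R V) X Y f \<phi> \<oplus>\<^bsub>Qmod R V Y\<^esub> FAct (Q R V) X Y f \<psi>"
    unfolding FAct_Q Qmod_ops
    by (intro ext) (use rc in \<open>simp del: carrier_free_mod FMod_ShiftM\<close>)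
next
  fix a \<phi> assume a: "a \<in> carrier R" and \<phi>: "\<phi> \<in> carrier (Qmod R V X)"
  have rc: "\<And>Z c. c \<in> carrier (FMod (Shift (Mfree R Y)) Z) \<Longrightarrow> rho R X Y f (sig Z) c \<in> carrier (FMod (Shift (Mfree R X)) Z)"
    using rho_closed[OF R] by simp
  show "FAct (Q R V) X Y f (a \<odot>\<^bsub>Qmod R V X\<^esub> \<phi>) = a \<odot>\<^bsub>Qmod R V Y\<^esub> FAct (Q R V) X Y f \<phi>"
    unfolding FAct_Q Qmod_ops
    by (intro ext) (use rc in \<open>simp del: carrier_free_mod FMod_ShiftM\<close>)
qed

lemma eta_hom:
  assumes X: "finite X"
  shows "eta R X \<in> module_hom R (Qmod R V X) (Q'mod V X)"
  unfolding module_hom_def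
proof (intro CollectI conjI ballI Pi_I)
  fix \<phi> assume "\<phi> \<in> carrier (Qmod R V X)"
  then show "eta R X \<phi> \<in> carrier (Q'mod V X)" by (rule eta_closed[OF R V X])
next
  fix \<phi> \<psi> assume \<phi>: "\<phi> \<in> carrier (Qmod R V X)" and \<psi>: "\<psi> \<in> carrier (Qmod R V X)"
  show "eta R X (\<phi> \<oplus>\<^bsub>Qmod R V X\<^esub> \<psi>) = eta R X \<phi> \<oplus>\<^bsub>Q'mod V X\<^esub> eta R X \<psi>"
    using X dlt_carrier_Shift[OF R]
    by (simp add: eta_def Qmod_ops Q'mod_def cong: restrict_cong del: carrier_free_mod FMod_ShiftM)
next
  fix a \<phi> assume a: "a \<in> carrier R" and \<phi>: "\<phi> \<in> carrier (Qmod R V X)"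
  show "eta R X (a \<odot>\<^bsub>Qmod R V X\<^esub> \<phi>) = a \<odot>\<^bsub>Q'mod V X\<^esub> eta R X \<phi>"
    using X dlt_carrier_Shift[OF R]
    by (simp add: eta_def Qmod_ops Q'mod_def cong: restrict_cong del: carrier_free_mod FMod_ShiftM)
qed

end


section \<open>Naturality of eta\<close>

lemma restrict_FIm: assumes f: "f \<in> FIm X Y" and x0: "x0 \<in> X"
  shows "restrict f (X - {x0}) \<in> FIm (X - {x0}) (Y - {f x0})"
  using FImD[OF f] FIm_inj[OF f] x0 by (intro FImI) (auto simp: inj_on_def)

lemma miss_FIm: assumes f: "f \<in> FIm X Y" and y: "y \<notin> f ` X"
  shows "f \<in> FIm X (Y - {y})"
  using f y by (auto simp: FIm_def PiE_def Pi_def)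

lemma FAct_Q': "FAct (Q' V) X Y f (v, w) =
        (FAct V X Y f v,
         \<lambda>y\<in>Y. (if y \<in> f ` X then
                   FAct V (X - {the_inv_into X f y}) (Y - {y})
                        (restrict f (X - {the_inv_into X f y})) (w (the_inv_into X f y))
                 else FAct V X (Y - {y}) f v))"
  by (simp add: Q'_def)

lemma tinv: "f \<in> FIm X Y \<Longrightarrow> x0 \<in> X \<Longrightarrow> the_inv_into X f (f x0) = x0"
  by (rule the_inv_into_f_f[OF FIm_inj])

context
  fixes R :: "('k,'m) ring_scheme" and V :: "('k,'v) fimod"
  assumes R: "cring R" and V: "is_FI_module R V"
begin

lemma eta_nat:
  assumes X: "finite X" and Y: "finite Y" and f: "f \<in> FIm X Y" and \<phi>: "\<phi> \<in> carrier (Qmod R V X)"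
  shows "eta R Y (FAct (Q R V) X Y f \<phi>) = FAct (Q' V) X Y f (eta R X \<phi>)"
proof -
  have \<phi>': "\<phi> \<in> FIHomE R (Shift (Mfree R X)) V" using \<phi> by (simp add: carrier_Qmod)
  have Fa: "FAct (Q R V) X Y f \<phi> Z (dlt R (FIm Y (sig Z)) k) = \<phi> Z (dlt R (FIm X (sig Z)) (compose X k f))"
    if Z: "finite Z" and k: "k \<in> FIm Y (sig Z)" for Z k
    using Z dlt_carrier_Shift[OF R, of Y Z k] rho_dlt[OF R Y finite_sig[OF Z] f k]
    by (simp add: FAct_Q del: carrier_free_mod FMod_ShiftM)
  have Pu: "FAct V X' Z g (\<phi> X' (dlt R (FIm X (sig X')) h)) = \<phi> Z (dlt R (FIm X (sig Z)) (compose X (sigf X' g) h))"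
    if X': "finite X'" and Z: "finite Z" and g: "g \<in> FIm X' Z" and h: "h \<in> FIm X (sig X')" for X' Z g h
    using FIHomE_nat[OF \<phi>' X' Z g dlt_carrier_Shift[OF R], of h] push_dlt[OF R X X' g h] by (metis)
  have 1: "FAct (Q R V) X Y f \<phi> Y (dlt R (FIm Y (sig Y)) (sgm Y)) = FAct V X Y f (\<phi> X (dlt R (FIm X (sig X)) (sgm X)))"
  proof -
    have "compose X (sgm Y) f = compose X (sigf X f) (sgm X)"
      using FImD[OF f] by (auto simp: compose_def sgm_def sigf_def sig_def intro!: ext)
    then show ?thesis using Fa[OF Y sgm_FIm] Pu[OF X Y f sgm_FIm] by simp
  qed
  have 2: "FAct (Q R V) X Y f \<phi> (Y - {y}) (dlt R (FIm Y (sig (Y - {y}))) (tau Y y))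
       = (if y \<in> f ` X then
           FAct V (X - {the_inv_into X f y}) (Y - {y}) (restrict f (X - {the_inv_into X f y}))
             (\<phi> (X - {the_inv_into X f y}) (dlt R (FIm X (sig (X - {the_inv_into X f y})))
                (tau X (the_inv_into X f y))))
         else FAct V X (Y - {y}) f (\<phi> X (dlt R (FIm X (sig X)) (sgm X))))"
    if y: "y \<in> Y" for y
  proof -
    have Y': "finite (Y - {y})" using Y by simp
    note L = Fa[OF Y' tau_FIm]
    show ?thesis
    proof (cases "y \<in> f ` X")
      case True
      then obtain x0 where x0: "x0 \<in> X" "y = f x0" by auto
      have ti: "the_inv_into X f y = x0" using tinv[OF f x0(1)] x0 by simp
      have X': "finite (X - {x0})" using X by simp
      have "compose X (tau Y y) f = compose X (sigf (X - {x0}) (restrict f (X - {x0}))) (tau X x0)"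
        using FImD[OF f] FIm_inj[OF f] x0
        by (auto simp: compose_def tau_def sigf_def sig_def inj_on_def intro!: ext)
      then show ?thesis
        using L Pu[OF X' Y' restrict_FIm[OF f x0(1), folded x0(2)] tau_FIm[of X x0]] True ti x0 by simp
    next
      case False
      have "compose X (tau Y y) f = compose X (sigf X f) (sgm X)"
        using FImD[OF f] False by (auto simp: compose_def tau_def sgm_def sigf_def sig_def intro!: ext)
      then show ?thesis
        using L Pu[OF X Y' miss_FIm[OF f False] sgm_FIm] False by simp
    qed
  qed
  have ti: "\<And>y. y \<in> f ` X \<Longrightarrow> the_inv_into X f y \<in> X"
    using the_inv_into_into[OF FIm_inj[OF f]] by blast
  show ?thesis
    using 1 2 ti by (simp add: eta_def FAct_Q' cong: restrict_cong if_cong)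
qed

end


section \<open>Q' is an FI-module\<close>

context
  fixes R :: "('k,'m) ring_scheme" and V :: "('k,'v) fimod"
  assumes R: "cring R" and V: "is_FI_module R V"
begin

lemma Q'_comp2:
  assumes X: "finite X" and Y: "finite Y" and f: "f \<in> FIm X Y" and y: "y \<in> Y"
    and w: "w \<in> (\<Pi>\<^sub>E x\<in>X. carrier (FMod V (X - {x})))" and v: "v \<in> carrier (FMod V X)"
  shows "(if y \<in> f ` X then
                   FAct V (X - {the_inv_into X f y}) (Y - {y})
                        (restrict f (X - {the_inv_into X f y})) (w (the_inv_into X f y))
                 else FAct V X (Y - {y}) f v) \<in> carrier (FMod V (Y - {y}))"
proof (cases "y \<in> f ` X")
  case True
  then obtain x0 where x0: "x0 \<in> X" "y = f x0" by auto
  have ti: "the_inv_into X f y = x0" using tinv[OF f x0(1)] x0 by simp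
  show ?thesis using True ti
    by (simp add: FI_closed[OF V _ _ restrict_FIm[OF f x0(1), folded x0(2)]] X Y PiE_mem[OF w x0(1)])
next
  case False
  then show ?thesis using FI_closed[OF V X _ miss_FIm[OF f False] v] Y by simp
qed

lemma Q'_closed:
  assumes X: "finite X" and Y: "finite Y" and f: "f \<in> FIm X Y" and vw: "vw \<in> carrier (Q'mod V X)"
  shows "FAct (Q' V) X Y f vw \<in> carrier (Q'mod V Y)"
proof -
  obtain v w where vw': "vw = (v, w)" "v \<in> carrier (FMod V X)"
    "w \<in> (\<Pi>\<^sub>E x\<in>X. carrier (FMod V (X - {x})))"
    using vw by (auto simp: carrier_Q'mod)
  show ?thesis unfolding vw'(1) FAct_Q' carrier_Q'mod
    using FI_closed[OF V X Y f vw'(2)] Q'_comp2[OF X Y f _ vw'(3,2)] by auto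
qed

lemma Q'_hom:
  assumes X: "finite X" and Y: "finite Y" and f: "f \<in> FIm X Y"
  shows "FAct (Q' V) X Y f \<in> module_hom R (Q'mod V X) (Q'mod V Y)"
  unfolding module_hom_def
proof (intro CollectI conjI ballI Pi_I)
  fix vw assume "vw \<in> carrier (Q'mod V X)"
  then show "FAct (Q' V) X Y f vw \<in> carrier (Q'mod V Y)" by (rule Q'_closed[OF X Y f])
next
  fix vw vw' assume a: "vw \<in> carrier (Q'mod V X)" and b: "vw' \<in> carrier (Q'mod V X)"
  obtain v w where vw: "vw = (v, w)" "v \<in> carrier (FMod V X)"
    "w \<in> (\<Pi>\<^sub>E x\<in>X. carrier (FMod V (X - {x})))"
    using a by (auto simp: carrier_Q'mod)
  obtain v' w' where vw': "vw' = (v', w')" "v' \<in> carrier (FMod V X)"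
    "w' \<in> (\<Pi>\<^sub>E x\<in>X. carrier (FMod V (X - {x})))"
    using b by (auto simp: carrier_Q'mod)
  have ti: "\<And>y. y \<in> f ` X \<Longrightarrow> the_inv_into X f y \<in> X"
    using the_inv_into_into[OF FIm_inj[OF f]] by blast
  have c2: "(if y \<in> f ` X then
                   FAct V (X - {the_inv_into X f y}) (Y - {y})
                        (restrict f (X - {the_inv_into X f y})) ((\<lambda>x\<in>X. w x \<oplus>\<^bsub>FMod V (X - {x})\<^esub> w' x) (the_inv_into X f y))
                 else FAct V X (Y - {y}) f (v \<oplus>\<^bsub>FMod V X\<^esub> v'))
     = (if y \<in> f ` X then
                   FAct V (X - {the_inv_into X f y}) (Y - {y})
                        (restrict f (X - {the_inv_into X f y})) (w (the_inv_into X f y))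
                 else FAct V X (Y - {y}) f v) \<oplus>\<^bsub>FMod V (Y - {y})\<^esub>
       (if y \<in> f ` X then
                   FAct V (X - {the_inv_into X f y}) (Y - {y})
                        (restrict f (X - {the_inv_into X f y})) (w' (the_inv_into X f y))
                 else FAct V X (Y - {y}) f v')" if y: "y \<in> Y" for y
  proof (cases "y \<in> f ` X")
    case True
    then obtain x0 where x0: "x0 \<in> X" "y = f x0" by auto
    have t: "the_inv_into X f y = x0" using tinv[OF f x0(1)] x0 by simp
    show ?thesis using True t x0(1)
      by (simp add: mh_add[OF FI_hom[OF V _ _ restrict_FIm[OF f x0(1), folded x0(2)]]] X Y
          PiE_mem[OF vw(3) x0(1)] PiE_mem[OF vw'(3) x0(1)])
  next
    case False
    then show ?thesis using mh_add[OF FI_hom[OF V X _ miss_FIm[OF f False]] vw(2) vw'(2)] Y by simp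
  qed
  show "FAct (Q' V) X Y f (vw \<oplus>\<^bsub>Q'mod V X\<^esub> vw') = FAct (Q' V) X Y f vw \<oplus>\<^bsub>Q'mod V Y\<^esub> FAct (Q' V) X Y f vw'"
    unfolding vw(1) vw'(1) using c2 mh_add[OF FI_hom[OF V X Y f] vw(2) vw'(2)]
    by (simp add: FAct_Q' Q'mod_def cong: restrict_cong)
next
  fix a vw assume a: "a \<in> carrier R" and b: "vw \<in> carrier (Q'mod V X)"
  obtain v w where vw: "vw = (v, w)" "v \<in> carrier (FMod V X)"
    "w \<in> (\<Pi>\<^sub>E x\<in>X. carrier (FMod V (X - {x})))"
    using b by (auto simp: carrier_Q'mod)
  have c2: "(if y \<in> f ` X then
                   FAct V (X - {the_inv_into X f y}) (Y - {y})
                        (restrict f (X - {the_inv_into X f y})) ((\<lambda>x\<in>X. a \<odot>\<^bsub>FMod V (X - {x})\<^esub> w x) (the_inv_into X f y))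
                 else FAct V X (Y - {y}) f (a \<odot>\<^bsub>FMod V X\<^esub> v))
     = a \<odot>\<^bsub>FMod V (Y - {y})\<^esub> (if y \<in> f ` X then
                   FAct V (X - {the_inv_into X f y}) (Y - {y})
                        (restrict f (X - {the_inv_into X f y})) (w (the_inv_into X f y))
                 else FAct V X (Y - {y}) f v)" if y: "y \<in> Y" for y
  proof (cases "y \<in> f ` X")
    case True
    then obtain x0 where x0: "x0 \<in> X" "y = f x0" by auto
    have t: "the_inv_into X f y = x0" using tinv[OF f x0(1)] x0 by simp
    show ?thesis using True t x0(1)
      by (simp add: mh_smult[OF FI_hom[OF V _ _ restrict_FIm[OF f x0(1), folded x0(2)]] a] X Y
          PiE_mem[OF vw(3) x0(1)])
  next
    case False
    then show ?thesis using mh_smult[OF FI_hom[OF V X _ miss_FIm[OF f False]] a vw(2)] Y by simp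
  qed
  show "FAct (Q' V) X Y f (a \<odot>\<^bsub>Q'mod V X\<^esub> vw) = a \<odot>\<^bsub>Q'mod V Y\<^esub> FAct (Q' V) X Y f vw"
    unfolding vw(1) using c2 mh_smult[OF FI_hom[OF V X Y f] a vw(2)]
    by (simp add: FAct_Q' Q'mod_def cong: restrict_cong)
qed

end


context
  fixes R :: "('k,'m) ring_scheme" and V :: "('k,'v) fimod"
  assumes R: "cring R" and V: "is_FI_module R V"
begin

lemma Q'_id:
  assumes X: "finite X" and vw: "vw \<in> carrier (Q'mod V X)"
  shows "FAct (Q' V) X X (restrict id X) vw = vw"
proof -
  obtain v w where vw': "vw = (v, w)" "v \<in> carrier (FMod V X)"
    "w \<in> (\<Pi>\<^sub>E x\<in>X. carrier (FMod V (X - {x})))"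
    using vw by (auto simp: carrier_Q'mod)
  have idf: "restrict id X \<in> FIm X X" by (auto intro!: FImI)
  have c: "(if y \<in> restrict id X ` X then
                   FAct V (X - {the_inv_into X (restrict id X) y}) (X - {y})
                        (restrict (restrict id X) (X - {the_inv_into X (restrict id X) y}))
                        (w (the_inv_into X (restrict id X) y))
                 else FAct V X (X - {y}) (restrict id X) v) = w y" if y: "y \<in> X" for y
  proof -
    have t: "the_inv_into X (restrict id X) y = y" using tinv[OF idf y] y by simp
    have r: "restrict (restrict id X) (X - {y}) = restrict id (X - {y})" by (auto intro!: ext)
    show ?thesis using y t r FI_id[OF V _ PiE_mem[OF vw'(3) y]] X by simp
  qed
  have "(\<lambda>y\<in>X. (if y \<in> restrict id X ` X then
                   FAct V (X - {the_inv_into X (restrict id X) y}) (X - {y})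
                        (restrict (restrict id X) (X - {the_inv_into X (restrict id X) y}))
                        (w (the_inv_into X (restrict id X) y))
                 else FAct V X (X - {y}) (restrict id X) v)) = w"
  proof (rule extensionalityI[of _ X])
    show "w \<in> extensional X" using vw'(3) by (simp add: PiE_def)
    fix y assume y: "y \<in> X"
    show "(\<lambda>y\<in>X. (if y \<in> restrict id X ` X then
                   FAct V (X - {the_inv_into X (restrict id X) y}) (X - {y})
                        (restrict (restrict id X) (X - {the_inv_into X (restrict id X) y}))
                        (w (the_inv_into X (restrict id X) y))
                 else FAct V X (X - {y}) (restrict id X) v)) y = w y"
      by (simp only: restrict_apply'[OF y] c[OF y])
  qed simp
  then show ?thesis unfolding vw'(1) FAct_Q' using FI_id[OF V X vw'(2)] by simp
qed

lemma Q'_comp: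
  assumes X: "finite X" and Y: "finite Y" and Z: "finite Z" and f: "f \<in> FIm X Y" and g: "g \<in> FIm Y Z"
    and vw: "vw \<in> carrier (Q'mod V X)"
  shows "FAct (Q' V) X Z (compose X g f) vw = FAct (Q' V) Y Z g (FAct (Q' V) X Y f vw)"
proof -
  obtain v w where vw': "vw = (v, w)" "v \<in> carrier (FMod V X)"
    "w \<in> (\<Pi>\<^sub>E x\<in>X. carrier (FMod V (X - {x})))"
    using vw by (auto simp: carrier_Q'mod)
  let ?gf = "compose X g f"
  have gf: "?gf \<in> FIm X Z" by (rule FIm_compose[OF f g])
  let ?w' = "\<lambda>y\<in>Y. (if y \<in> f ` X then
                   FAct V (X - {the_inv_into X f y}) (Y - {y})
                        (restrict f (X - {the_inv_into X f y})) (w (the_inv_into X f y))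
                 else FAct V X (Y - {y}) f v)"
  let ?v' = "FAct V X Y f v"
  have c: "(if z \<in> ?gf ` X then
                   FAct V (X - {the_inv_into X ?gf z}) (Z - {z})
                        (restrict ?gf (X - {the_inv_into X ?gf z})) (w (the_inv_into X ?gf z))
                 else FAct V X (Z - {z}) ?gf v)
     = (if z \<in> g ` Y then
                   FAct V (Y - {the_inv_into Y g z}) (Z - {z})
                        (restrict g (Y - {the_inv_into Y g z})) (?w' (the_inv_into Y g z))
                 else FAct V Y (Z - {z}) g ?v')" if z: "z \<in> Z" for z
  proof (cases "z \<in> ?gf ` X")
    case True
    then obtain x0 where x0: "x0 \<in> X" "z = ?gf x0" by auto
    have fx0: "f x0 \<in> Y" using FImD[OF f x0(1)] .
    have z': "z = g (f x0)" using x0 by (simp add: compose_def)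
    have t1: "the_inv_into X ?gf z = x0" using tinv[OF gf x0(1)] x0 by simp
    have t3: "the_inv_into Y g z = f x0" using tinv[OF g fx0] z' by simp
    have t2: "the_inv_into X f (f x0) = x0" using tinv[OF f x0(1)] .
    have zg: "z \<in> g ` Y" using z' fx0 by auto
    have X': "finite (X - {x0})" and Y': "finite (Y - {f x0})" and Z': "finite (Z - {z})"
      using X Y Z by auto
    have rf: "restrict f (X - {x0}) \<in> FIm (X - {x0}) (Y - {f x0})" by (rule restrict_FIm[OF f x0(1)])
    have rg: "restrict g (Y - {f x0}) \<in> FIm (Y - {f x0}) (Z - {z})"
      using restrict_FIm[OF g fx0] z' by simp
    have e: "compose (X - {x0}) (restrict g (Y - {f x0})) (restrict f (X - {x0})) = restrict ?gf (X - {x0})"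
    proof (rule ext)
      fix x show "compose (X - {x0}) (restrict g (Y - {f x0})) (restrict f (X - {x0})) x = restrict ?gf (X - {x0}) x"
      proof (cases "x \<in> X - {x0}")
        case True
        then have "f x \<in> Y" "f x \<noteq> f x0" using FImD[OF f] inj_onD[OF FIm_inj[OF f] _ _ x0(1)] by auto
        then show ?thesis using True by (simp add: compose_def)
      next
        case False
        then show ?thesis by (auto simp: compose_def)
      qed
    qed
    show ?thesis
      using True zg t1 t3 t2 fx0 x0(1) FI_comp[OF V X' Y' Z' rf rg PiE_mem[OF vw'(3) x0(1)]] e
      by simp
  next
    case False
    show ?thesis
    proof (cases "z \<in> g ` Y")
      case True
      then obtain y where y: "y \<in> Y" "z = g y" by auto
      have t3: "the_inv_into Y g z = y" using tinv[OF g y(1)] y by simp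
      have yf: "y \<notin> f ` X" using False y by (auto simp: compose_def)
      have Y': "finite (Y - {y})" and Z': "finite (Z - {z})" using Y Z by auto
      have rg: "restrict g (Y - {y}) \<in> FIm (Y - {y}) (Z - {z})"
        using restrict_FIm[OF g y(1)] y by simp
      have e: "compose X (restrict g (Y - {y})) f = ?gf"
      proof (rule ext)
        fix x show "compose X (restrict g (Y - {y})) f x = ?gf x"
        proof (cases "x \<in> X")
          case True
          then have "f x \<in> Y" "f x \<noteq> y" using FImD[OF f] yf by auto
          then show ?thesis using True by (simp add: compose_def)
        next
          case False
          then show ?thesis by (simp add: compose_def)
        qed
      qed
      show ?thesis
        using False True t3 y(1) yf FI_comp[OF V X Y' Z' miss_FIm[OF f yf] rg vw'(2)] e by simp
    next
      case False2: False
      have Z': "finite (Z - {z})" using Z by auto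
      show ?thesis
        using False False2 FI_comp[OF V X Y Z' f miss_FIm[OF g False2] vw'(2)] by simp
    qed
  qed
  show ?thesis unfolding vw'(1) FAct_Q'
    using c FI_comp[OF V X Y Z f g vw'(2)] by (simp cong: restrict_cong)
qed

end


lemma FMod_Q': "FMod (Q' V) X = Q'mod V X" by (simp add: Q'_def)

context
  fixes R :: "('k,'m) ring_scheme" and V :: "('k,'v) fimod"
  assumes R: "cring R" and V: "is_FI_module R V"
begin

lemma Q'_FI: "is_FI_module R (Q' V)"
  unfolding is_FI_module_def FMod_Q'
proof (intro conjI allI impI ballI)
  fix X :: "nat set" assume "finite X"
  then show "module R (Q'mod V X)" by (rule Q'mod_module[OF R V])
next
  fix X Y :: "nat set" and f assume "finite X" "finite Y" "f \<in> FIm X Y"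
  then show "FAct (Q' V) X Y f \<in> module_hom R (Q'mod V X) (Q'mod V Y)" by (rule Q'_hom[OF R V])
next
  fix X :: "nat set" and vw assume "finite X" "vw \<in> carrier (Q'mod V X)"
  then show "FAct (Q' V) X X (restrict id X) vw = vw" by (rule Q'_id[OF R V])
next
  fix X Y Z :: "nat set" and f g vw
  assume "finite X" "finite Y" "finite Z" "f \<in> FIm X Y" "g \<in> FIm Y Z" "vw \<in> carrier (Q'mod V X)"
  then show "FAct (Q' V) X Z (compose X g f) vw = FAct (Q' V) Y Z g (FAct (Q' V) X Y f vw)"
    by (rule Q'_comp[OF R V])
qed

lemma eta_inj:
  assumes X: "finite X" and a: "a \<in> carrier (Qmod R V X)" and b: "b \<in> carrier (Qmod R V X)"
    and e: "eta R X a = eta R X b"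
  shows "a = b"
proof -
  have "a = bld R V X (eta R X a)" using bld_eta[OF R V X a] by simp
  also have "\<dots> = bld R V X (eta R X b)" using e by simp
  also have "\<dots> = b" using bld_eta[OF R V X b] by simp
  finally show ?thesis .
qed

lemma Q_FI: "is_FI_module R (Q R V)"
  unfolding is_FI_module_def FMod_Q
proof (intro conjI allI impI ballI)
  fix X :: "nat set" assume "finite X"
  then show "module R (Qmod R V X)" by (rule Qmod_module[OF R V])
next
  fix X Y :: "nat set" and f assume "finite X" "finite Y" "f \<in> FIm X Y"
  then show "FAct (Q R V) X Y f \<in> module_hom R (Qmod R V X) (Qmod R V Y)" by (rule Q_act_hom[OF R V])
next
  fix X :: "nat set" and \<phi> assume X: "finite X" and \<phi>: "\<phi> \<in> carrier (Qmod R V X)"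
  have idf: "restrict id X \<in> FIm X X" by (auto intro!: FImI)
  show "FAct (Q R V) X X (restrict id X) \<phi> = \<phi>"
  proof (rule eta_inj[OF X Q_act_closed[OF R V X X idf \<phi>] \<phi>])
    show "eta R X (FAct (Q R V) X X (restrict id X) \<phi>) = eta R X \<phi>"
      using eta_nat[OF R V X X idf \<phi>] Q'_id[OF R V X eta_closed[OF R V X \<phi>]] by simp
  qed
next
  fix X Y Z :: "nat set" and f g \<phi>
  assume X: "finite X" and Y: "finite Y" and Z: "finite Z" and f: "f \<in> FIm X Y" and g: "g \<in> FIm Y Z"
    and \<phi>: "\<phi> \<in> carrier (Qmod R V X)"
  have gf: "compose X g f \<in> FIm X Z" by (rule FIm_compose[OF f g])
  have f\<phi>: "FAct (Q R V) X Y f \<phi> \<in> carrier (Qmod R V Y)" by (rule Q_act_closed[OF R V X Y f \<phi>])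
  show "FAct (Q R V) X Z (compose X g f) \<phi> = FAct (Q R V) Y Z g (FAct (Q R V) X Y f \<phi>)"
  proof (rule eta_inj[OF Z Q_act_closed[OF R V X Z gf \<phi>] Q_act_closed[OF R V Y Z g f\<phi>]])
    show "eta R Z (FAct (Q R V) X Z (compose X g f) \<phi>) = eta R Z (FAct (Q R V) Y Z g (FAct (Q R V) X Y f \<phi>))"
      using eta_nat[OF R V X Z gf \<phi>] eta_nat[OF R V Y Z g f\<phi>] eta_nat[OF R V X Y f \<phi>]
        Q'_comp[OF R V X Y Z f g eta_closed[OF R V X \<phi>]] by simp
  qed
qed

lemma eta_iso: "FIIso R (Q R V) (Q' V) (eta R)"
  unfolding FIIso_def FIHom_def FMod_Q FMod_Q'
proof (intro conjI allI impI CollectI ballI)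
  fix X :: "nat set" assume "finite X"
  then show "eta R X \<in> module_hom R (Qmod R V X) (Q'mod V X)" by (rule eta_hom[OF R V])
next
  fix X Y :: "nat set" and f \<phi> assume "finite X" "finite Y" "f \<in> FIm X Y" "\<phi> \<in> carrier (Qmod R V X)"
  then show "eta R Y (FAct (Q R V) X Y f \<phi>) = FAct (Q' V) X Y f (eta R X \<phi>)" by (rule eta_nat[OF R V])
next
  fix X :: "nat set" assume X: "finite X"
  show "bij_betw (eta R X) (carrier (Qmod R V X)) (carrier (Q'mod V X))"
  proof (rule bij_betw_byWitness[where f' = "bld R V X"])
    show "\<forall>a\<in>carrier (Qmod R V X). bld R V X (eta R X a) = a" using bld_eta[OF R V X] by blast
    show "\<forall>a'\<in>carrier (Q'mod V X). eta R X (bld R V X a') = a'" using eta_bld[OF R V X] by blast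
    show "eta R X ` carrier (Qmod R V X) \<subseteq> carrier (Q'mod V X)" using eta_closed[OF R V X] by blast
    show "bld R V X ` carrier (Q'mod V X) \<subseteq> carrier (Qmod R V X)"
      using bld_hom[OF R V X] by (auto simp: carrier_Qmod)
  qed
qed

end

theorem mainTheorem3:
  fixes R :: "('k, 'm) ring_scheme"
  assumes "cring R"
  shows "\<exists>\<eta> :: ('k, 'v) fimod \<Rightarrow> nat set \<Rightarrow> (nat set \<Rightarrow> ((nat \<Rightarrow> nat) \<Rightarrow> 'k) \<Rightarrow> 'v)
                 \<Rightarrow> 'v \<times> (nat \<Rightarrow> 'v).
     (\<forall>V. is_FI_module R V \<longrightarrow>
        is_FI_module R (Q R V) \<and> is_FI_module R (Q' V) \<and> FIIso R (Q R V) (Q' V) (\<eta> V))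
   \<and> (\<forall>V W \<alpha>. is_FI_module R V \<longrightarrow> is_FI_module R W \<longrightarrow> \<alpha> \<in> FIHom R V W \<longrightarrow>
        (\<forall>X. finite X \<longrightarrow> (\<forall>\<phi>\<in>carrier (FMod (Q R V) X).
           \<eta> W X (Qmap R \<alpha> X \<phi>) = Q'map \<alpha> X (\<eta> V X \<phi>))))"
proof (rule exI[of _ "\<lambda>V. eta R"], intro conjI allI impI ballI)
  fix V :: "('k, 'v) fimod" assume V: "is_FI_module R V"
  show "is_FI_module R (Q R V)" by (rule Q_FI[OF assms V])
  show "is_FI_module R (Q' V)" by (rule Q'_FI[OF assms V])
  show "FIIso R (Q R V) (Q' V) (eta R)" by (rule eta_iso[OF assms V])
next
  fix V W :: "('k, 'v) fimod" and \<alpha> and X :: "nat set" and \<phi>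
  assume "finite X"
  then show "eta R X (Qmap R \<alpha> X \<phi>) = Q'map \<alpha> X (eta R X \<phi>)"
    using dlt_carrier_Shift[OF assms]
    by (simp add: eta_def Qmap_def Q'map_def cong: restrict_cong del: carrier_free_mod FMod_ShiftM)
qed

end
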